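(* Let $k$ be a field, $\Gamma=(V,E)$ a finite connected quiver, $I\subseteq R^2$ a two-sided ideal of $k\Gamma$, and $\mathscr{Q}$ a fixed basis of $k\Gamma/I$ as in the context. Then $\mathfrak{B}=\mathfrak{B}_1\cup\mathfrak{B}_2$ is a $k$-basis of the space $\mathrm{Diff}(k\Gamma,k\Gamma/I)$ of differential operators from $k\Gamma$ to $k\Gamma/I$, where $\mathfrak{B}_1=\{D_{\overline{s}}\mid\overline{s}\in\mathscr{Q}_A\}$ and $\mathfrak{B}_2=\{D_{r,\overline{s}}\mid r\in E,\ \overline{s}\in\mathscr{Q},\ r\parallel\overline{s}\}$.
   Context: For a path $p$, $t(p),h(p)$ are its start and end vertex (vertices are trivial paths); paths multiply by left-to-right concatenation (product $0$ if they do not concatenate). $R$ is the ideal generated by $E$, $\overline{x}=x+I$. A differential operator from $k\Gamma$ to $k\Gamma/I$ is a $k$-linear map $D$ with $D(xy)=D(x)\overline{y}+\overline{x}D(y)$. $\mathscr{Q}$ is a fixed $k$-basis of $k\Gamma/I$ consisting of residue classes of paths and containing $\overline{v}$ ($v\in V$) and $\overline{e}$ ($e\in E$); for $\overline{q}\in\mathscr{Q}$, $t(\overline{q}),h(\overline{q})$ are the start/end vertex of any representing path (well defined), and $r\parallel\overline{s}$ means $t(r)=t(\overline{s})$, $h(r)=h(\overline{s})$. $\mathscr{Q}_A=\{\overline{q}\in\mathscr{Q}\mid t(\overline{q})\neq h(\overline{q})\}$. For $m\in k\Gamma/I$, $D_m$ is the inner differential operator $x\mapsto m\overline{x}-\overline{x}m$.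 For $r\in E$ and $\overline{s}\in\mathscr{Q}$ with $r\parallel\overline{s}$, $D_{r,\overline{s}}$ is the unique differential operator $k\Gamma\to k\Gamma/I$ with $D_{r,\overline{s}}(r)=\overline{s}$ and $D_{r,\overline{s}}(x)=0$ for all $x\in (E\setminus\{r\})\cup V$. *)

theory Defs
  imports Main
begin

text \<open>A path is a pair (v, es): a start vertex and a list of
  consecutive edges (es = [] gives the trivial path at v).\<close>

type_synonym ('v,'e) path = "'v \<times> 'e list"
type_synonym ('v,'e,'k) pa = "('v,'e) path \<Rightarrow> 'k"

definition is_path :: "'v set \<Rightarrow> 'e set \<Rightarrow> ('e \<Rightarrow> 'v) \<Rightarrow> ('e \<Rightarrow> 'v) \<Rightarrow> ('v,'e) path \<Rightarrow> bool" where
  "is_path V E src tgt p \<longleftrightarrow> fst p \<in> V \<and> set (snd p) \<subseteq> E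
     \<and> (snd p \<noteq> [] \<longrightarrow> src (hd (snd p)) = fst p)
     \<and> (\<forall>i. Suc i < length (snd p) \<longrightarrow> tgt (snd p ! i) = src (snd p ! Suc i))"

definition pend :: "('e \<Rightarrow> 'v) \<Rightarrow> ('v,'e) path \<Rightarrow> 'v" where
  "pend tgt p = (if snd p = [] then fst p else tgt (last (snd p)))"

definition finite_connected_quiver :: "'v set \<Rightarrow> 'e set \<Rightarrow> ('e \<Rightarrow> 'v) \<Rightarrow> ('e \<Rightarrow> 'v) \<Rightarrow> bool" where
  "finite_connected_quiver V E src tgt \<longleftrightarrow> finite V \<and> finite E
     \<and> (\<forall>e\<in>E. src e \<in> V \<and> tgt e \<in> V)
     \<and> (\<forall>u\<in>V. \<forall>w\<in>V. (u, w) \<in> ({(src e, tgt e) | e. e \<in> E} \<union> {(tgt e, src e) | e. e \<in> E})\<^sup>*)"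

definition PA :: "'v set \<Rightarrow> 'e set \<Rightarrow> ('e \<Rightarrow> 'v) \<Rightarrow> ('e \<Rightarrow> 'v) \<Rightarrow> ('v,'e,'k::zero) pa set" where
  "PA V E src tgt = {f. finite {p. f p \<noteq> 0} \<and> (\<forall>p. f p \<noteq> 0 \<longrightarrow> is_path V E src tgt p)}"

definition padd :: "('v,'e,'k::plus) pa \<Rightarrow> ('v,'e,'k) pa \<Rightarrow> ('v,'e,'k) pa" where
  "padd f g = (\<lambda>p. f p + g p)"

definition psc :: "'k::times \<Rightarrow> ('v,'e,'k) pa \<Rightarrow> ('v,'e,'k) pa" where
  "psc c f = (\<lambda>p. c * f p)"

text \<open>Multiplication: left-to-right concatenation of paths, extended bilinearly.\<close>
definition pmult :: "('e \<Rightarrow> 'v) \<Rightarrow> ('v,'e,'k::comm_ring_1) pa \<Rightarrow> ('v,'e,'k) pa \<Rightarrow> ('v,'e,'k) pa" where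
  "pmult tgt f g = (\<lambda>p. \<Sum>(q, r) \<in> {(q, r). f q \<noteq> 0 \<and> g r \<noteq> 0 \<and> pend tgt q = fst r
                                       \<and> (fst q, snd q @ snd r) = p}. f q * g r)"

definition delta :: "('v,'e) path \<Rightarrow> ('v,'e,'k::{zero,one}) pa" where
  "delta p = (\<lambda>q. if q = p then 1 else 0)"

definition is_ideal :: "'v set \<Rightarrow> 'e set \<Rightarrow> ('e \<Rightarrow> 'v) \<Rightarrow> ('e \<Rightarrow> 'v) \<Rightarrow> ('v,'e,'k::field) pa set \<Rightarrow> bool" where
  "is_ideal V E src tgt J \<longleftrightarrow> J \<subseteq> PA V E src tgt \<and> (\<lambda>_. 0) \<in> J
     \<and> (\<forall>x\<in>J. \<forall>y\<in>J. padd x y \<in> J) \<and> (\<forall>c. \<forall>x\<in>J. psc c x \<in> J)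
     \<and> (\<forall>x\<in>PA V E src tgt. \<forall>j\<in>J. pmult tgt x j \<in> J \<and> pmult tgt j x \<in> J)"

definition gen_ideal :: "'v set \<Rightarrow> 'e set \<Rightarrow> ('e \<Rightarrow> 'v) \<Rightarrow> ('e \<Rightarrow> 'v) \<Rightarrow> ('v,'e,'k::field) pa set \<Rightarrow> ('v,'e,'k) pa set" where
  "gen_ideal V E src tgt S = \<Inter>{J. is_ideal V E src tgt J \<and> S \<subseteq> J}"

definition Rid :: "'v set \<Rightarrow> 'e set \<Rightarrow> ('e \<Rightarrow> 'v) \<Rightarrow> ('e \<Rightarrow> 'v) \<Rightarrow> ('v,'e,'k::field) pa set" where
  "Rid V E src tgt = gen_ideal V E src tgt {delta (src e, [e]) | e. e \<in> E}"

definition R2 :: "'v set \<Rightarrow> 'e set \<Rightarrow> ('e \<Rightarrow> 'v) \<Rightarrow> ('e \<Rightarrow> 'v) \<Rightarrow> ('v,'e,'k::field) pa set" where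
  "R2 V E src tgt = gen_ideal V E src tgt
     {pmult tgt x y | x y. x \<in> Rid V E src tgt \<and> y \<in> Rid V E src tgt}"

text \<open>The quotient k Gamma / I: residue classes are cosets x + I.\<close>
definition cls :: "('v,'e,'k::field) pa set \<Rightarrow> ('v,'e,'k) pa \<Rightarrow> ('v,'e,'k) pa set" where
  "cls I x = {padd x i | i. i \<in> I}"

definition Qcar :: "'v set \<Rightarrow> 'e set \<Rightarrow> ('e \<Rightarrow> 'v) \<Rightarrow> ('e \<Rightarrow> 'v) \<Rightarrow> ('v,'e,'k::field) pa set \<Rightarrow> ('v,'e,'k) pa set set" where
  "Qcar V E src tgt I = cls I ` PA V E src tgt"

definition qadd :: "('v,'e,'k::field) pa set \<Rightarrow> ('v,'e,'k) pa set \<Rightarrow> ('v,'e,'k) pa set" where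
  "qadd A B = {padd a b | a b. a \<in> A \<and> b \<in> B}"

definition qscale :: "('v,'e,'k::field) pa set \<Rightarrow> 'k \<Rightarrow> ('v,'e,'k) pa set \<Rightarrow> ('v,'e,'k) pa set" where
  "qscale I c A = {padd (psc c a) i | a i. a \<in> A \<and> i \<in> I}"

definition qmult :: "('e \<Rightarrow> 'v) \<Rightarrow> ('v,'e,'k::field) pa set \<Rightarrow> ('v,'e,'k) pa set \<Rightarrow> ('v,'e,'k) pa set \<Rightarrow> ('v,'e,'k) pa set" where
  "qmult tgt I A B = {padd (pmult tgt a b) i | a b i. a \<in> A \<and> b \<in> B \<and> i \<in> I}"

definition qsum :: "('v,'e,'k::field) pa set \<Rightarrow> 'j set \<Rightarrow> ('j \<Rightarrow> ('v,'e,'k) pa set) \<Rightarrow> ('v,'e,'k) pa set" where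
  "qsum I S A = {padd (\<lambda>p. \<Sum>j\<in>S. f j p) i | f i. (\<forall>j\<in>S. f j \<in> A j) \<and> i \<in> I}"

definition is_quot_basis :: "'v set \<Rightarrow> 'e set \<Rightarrow> ('e \<Rightarrow> 'v) \<Rightarrow> ('e \<Rightarrow> 'v) \<Rightarrow> ('v,'e,'k::field) pa set \<Rightarrow> ('v,'e,'k) pa set set \<Rightarrow> bool" where
  "is_quot_basis V E src tgt I Qb \<longleftrightarrow> Qb \<subseteq> Qcar V E src tgt I
     \<and> (\<forall>A\<in>Qcar V E src tgt I. \<exists>S c. finite S \<and> S \<subseteq> Qb \<and> A = qsum I S (\<lambda>q. qscale I (c q) q))
     \<and> (\<forall>S c. finite S \<and> S \<subseteq> Qb \<and> qsum I S (\<lambda>q. qscale I (c q) q) = I \<longrightarrow> (\<forall>q\<in>S. c q = 0))"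

text \<open>Start / end vertex of a basis element (of any representing path).\<close>
definition qrep :: "'v set \<Rightarrow> 'e set \<Rightarrow> ('e \<Rightarrow> 'v) \<Rightarrow> ('e \<Rightarrow> 'v) \<Rightarrow> ('v,'e,'k::field) pa set \<Rightarrow> ('v,'e,'k) pa set \<Rightarrow> ('v,'e) path" where
  "qrep V E src tgt I q = (SOME p. is_path V E src tgt p \<and> cls I (delta p) = q)"

definition qt where "qt V E src tgt I q = fst (qrep V E src tgt I q)"
definition qh where "qh V E src tgt I q = pend tgt (qrep V E src tgt I q)"

definition QA :: "'v set \<Rightarrow> 'e set \<Rightarrow> ('e \<Rightarrow> 'v) \<Rightarrow> ('e \<Rightarrow> 'v) \<Rightarrow> ('v,'e,'k::field) pa set \<Rightarrow> ('v,'e,'k) pa set set \<Rightarrow> ('v,'e,'k) pa set set" where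
  "QA V E src tgt I Qb = {q \<in> Qb. qt V E src tgt I q \<noteq> qh V E src tgt I q}"

text \<open>Differential operators k Gamma -> k Gamma / I (k-linear, Leibniz rule);
  extensional: value 0 (= I) outside the carrier.\<close>
definition Diff :: "'v set \<Rightarrow> 'e set \<Rightarrow> ('e \<Rightarrow> 'v) \<Rightarrow> ('e \<Rightarrow> 'v) \<Rightarrow> ('v,'e,'k::field) pa set
     \<Rightarrow> (('v,'e,'k) pa \<Rightarrow> ('v,'e,'k) pa set) set" where
  "Diff V E src tgt I = {D.
     (\<forall>x\<in>PA V E src tgt. D x \<in> Qcar V E src tgt I)
   \<and> (\<forall>x. x \<notin> PA V E src tgt \<longrightarrow> D x = I)
   \<and> (\<forall>x\<in>PA V E src tgt. \<forall>y\<in>PA V E src tgt. D (padd x y) = qadd (D x) (D y))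
   \<and> (\<forall>c. \<forall>x\<in>PA V E src tgt. D (psc c x) = qscale I c (D x))
   \<and> (\<forall>x\<in>PA V E src tgt. \<forall>y\<in>PA V E src tgt.
        D (pmult tgt x y) = qadd (qmult tgt I (D x) (cls I y)) (qmult tgt I (cls I x) (D y)))}"

definition Dinner :: "'v set \<Rightarrow> 'e set \<Rightarrow> ('e \<Rightarrow> 'v) \<Rightarrow> ('e \<Rightarrow> 'v) \<Rightarrow> ('v,'e,'k::field) pa set
     \<Rightarrow> ('v,'e,'k) pa set \<Rightarrow> ('v,'e,'k) pa \<Rightarrow> ('v,'e,'k) pa set" where
  "Dinner V E src tgt I m = (\<lambda>x. if x \<in> PA V E src tgt
      then qadd (qmult tgt I m (cls I x)) (qscale I (-1) (qmult tgt I (cls I x) m)) else I)"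

definition Drs :: "'v set \<Rightarrow> 'e set \<Rightarrow> ('e \<Rightarrow> 'v) \<Rightarrow> ('e \<Rightarrow> 'v) \<Rightarrow> ('v,'e,'k::field) pa set
     \<Rightarrow> 'e \<Rightarrow> ('v,'e,'k) pa set \<Rightarrow> ('v,'e,'k) pa \<Rightarrow> ('v,'e,'k) pa set" where
  "Drs V E src tgt I r s = (THE D. D \<in> Diff V E src tgt I \<and> D (delta (src r, [r])) = s
      \<and> (\<forall>e\<in>E - {r}. D (delta (src e, [e])) = I) \<and> (\<forall>v\<in>V. D (delta (v, [])) = I))"

definition B1 where
  "B1 V E src tgt I Qb = {Dinner V E src tgt I s | s. s \<in> QA V E src tgt I Qb}"

definition B2 where
  "B2 V E src tgt I Qb = {Drs V E src tgt I r s | r s. r \<in> E \<and> s \<in> Qb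
      \<and> src r = qt V E src tgt I s \<and> tgt r = qh V E src tgt I s}"

definition is_diff_basis :: "'v set \<Rightarrow> 'e set \<Rightarrow> ('e \<Rightarrow> 'v) \<Rightarrow> ('e \<Rightarrow> 'v) \<Rightarrow> ('v,'e,'k::field) pa set
     \<Rightarrow> (('v,'e,'k) pa \<Rightarrow> ('v,'e,'k) pa set) set \<Rightarrow> bool" where
  "is_diff_basis V E src tgt I B \<longleftrightarrow> B \<subseteq> Diff V E src tgt I
     \<and> (\<forall>D\<in>Diff V E src tgt I. \<exists>S c. finite S \<and> S \<subseteq> B
          \<and> D = (\<lambda>x. qsum I S (\<lambda>F. qscale I (c F) (F x))))
     \<and> (\<forall>S c. finite S \<and> S \<subseteq> B \<and> (\<lambda>x. qsum I S (\<lambda>F. qscale I (c F) (F x))) = (\<lambda>x. I)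
          \<longrightarrow> (\<forall>F\<in>S. c F = 0))"

end

theory Submission
  imports Defs "HOL-Library.Function_Algebras"
begin

definition supp :: "('a \<Rightarrow> 'k::field) \<Rightarrow> 'a set" where "supp f = {p. f p \<noteq> 0}"
definition FS :: "('a \<Rightarrow> 'k::field) set" where "FS = {f. finite (supp f)}"

lemma sum_fun_apply: "(sum F A) x = (\<Sum>i\<in>A. F i x)"
  by (induction A rule: infinite_finite_induct) auto

lemma padd_eq: "padd f g = f + g" by (simp add: padd_def plus_fun_def)

lemma FS_add: "f \<in> FS \<Longrightarrow> g \<in> FS \<Longrightarrow> f + g \<in> FS"
  unfolding FS_def supp_def mem_Collect_eq
  by (rule finite_subset[of _ "{p. f p \<noteq> 0} \<union> {p. g p \<noteq> 0}"]) auto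
lemma FS_zero: "0 \<in> FS" unfolding FS_def supp_def by simp
lemma FS_sc: "f \<in> FS \<Longrightarrow> psc c f \<in> FS"
  unfolding FS_def supp_def psc_def mem_Collect_eq
  by (rule finite_subset[of _ "{p. f p \<noteq> 0}"]) auto
lemma FS_uminus: "f \<in> FS \<Longrightarrow> - f \<in> FS"
  unfolding FS_def supp_def mem_Collect_eq by (simp add: fun_Compl_def)
lemma FS_diff: "f \<in> FS \<Longrightarrow> g \<in> FS \<Longrightarrow> (f - g) \<in> FS"
  using FS_add[of f "- g"] FS_uminus[of g] by simp
lemma FS_sum: "(\<And>i. i \<in> A \<Longrightarrow> F i \<in> FS) \<Longrightarrow> sum F A \<in> FS"
  by (induction A rule: infinite_finite_induct) (auto simp: FS_zero FS_add)
lemma FS_delta: "delta p \<in> FS"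
  unfolding FS_def supp_def delta_def mem_Collect_eq
  by (rule finite_subset[of _ "{p}"]) auto

lemma supp_delta: "supp (delta p :: _ \<Rightarrow> 'k::field) = {p}"
  by (auto simp: supp_def delta_def)

lemma pmult_alt:
  fixes f g :: "('v,'e,'k::field) pa"
  assumes "finite A" "finite B" "supp f \<subseteq> A" "supp g \<subseteq> B"
  shows "pmult tgt f g p = (\<Sum>q\<in>A. \<Sum>r\<in>B. if pend tgt q = fst r \<and> (fst q, snd q @ snd r) = p then f q * g r else 0)"
proof -
  let ?h = "\<lambda>(q,r). if pend tgt q = fst r \<and> (fst q, snd q @ snd r) = p then f q * g r else 0"
  have "(\<Sum>q\<in>A. \<Sum>r\<in>B. if pend tgt q = fst r \<and> (fst q, snd q @ snd r) = p then f q * g r else 0)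
     = sum ?h (A \<times> B)" by (simp add: sum.cartesian_product)
  also have "\<dots> = sum ?h {(q, r). f q \<noteq> 0 \<and> g r \<noteq> 0 \<and> pend tgt q = fst r \<and> (fst q, snd q @ snd r) = p}"
    apply (rule sum.mono_neutral_right)
    using assms by (auto simp: supp_def split: if_splits)
  also have "\<dots> = pmult tgt f g p" unfolding pmult_def
    by (rule sum.cong) auto
  finally show ?thesis by simp
qed

lemma supp_FS: "f \<in> FS \<Longrightarrow> finite (supp f)" by (simp add: FS_def)

lemma pmult_delta:
  "pmult tgt (delta a) (delta b :: ('v,'e,'k::field) pa) =
     (if pend tgt a = fst b then delta (fst a, snd a @ snd b) else 0)"
proof (rule ext)
  fix p
  show "pmult tgt (delta a) (delta b :: ('v,'e,'k::field) pa) p =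
     (if pend tgt a = fst b then delta (fst a, snd a @ snd b) else 0) p"
    apply (subst pmult_alt[of "{a}" "{b}"])
        apply (simp_all add: supp_delta)
    apply (auto simp: delta_def)
    done
qed

lemma pmult_add_left:
  fixes f g h :: "('v,'e,'k::field) pa"
  assumes "f \<in> FS" "g \<in> FS" "h \<in> FS"
  shows "pmult tgt (f + g) h = pmult tgt f h + pmult tgt g h"
proof (rule ext)
  fix p
  let ?A = "supp f \<union> supp g" and ?B = "supp h"
  have fin: "finite ?A" "finite ?B" using assms by (auto simp: FS_def)
  have s: "supp (f + g) \<subseteq> ?A" by (auto simp: supp_def)
  have sf: "supp f \<subseteq> ?A" and sg: "supp g \<subseteq> ?A" by auto
  show "pmult tgt (f + g) h p = (pmult tgt f h + pmult tgt g h) p"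
    apply (simp only: plus_fun_apply pmult_alt[OF fin s order.refl] pmult_alt[OF fin sf order.refl] pmult_alt[OF fin sg order.refl])
    apply (auto simp: sum.distrib[symmetric] distrib_right intro!: sum.cong)
    done
qed

lemma pmult_add_right:
  fixes f g h :: "('v,'e,'k::field) pa"
  assumes "f \<in> FS" "g \<in> FS" "h \<in> FS"
  shows "pmult tgt h (f + g) = pmult tgt h f + pmult tgt h g"
proof (rule ext)
  fix p
  let ?A = "supp f \<union> supp g" and ?B = "supp h"
  have fin: "finite ?A" "finite ?B" using assms by (auto simp: FS_def)
  have s: "supp (f + g) \<subseteq> ?A" by (auto simp: supp_def)
  have sf: "supp f \<subseteq> ?A" and sg: "supp g \<subseteq> ?A" by auto
  show "pmult tgt h (f + g) p = (pmult tgt h f + pmult tgt h g) p"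
    apply (simp only: plus_fun_apply pmult_alt[OF fin(2) fin(1) order.refl s] pmult_alt[OF fin(2) fin(1) order.refl sf] pmult_alt[OF fin(2) fin(1) order.refl sg])
    apply (auto simp: sum.distrib[symmetric] distrib_left intro!: sum.cong)
    done
qed

lemma pmult_sc_left:
  fixes f g :: "('v,'e,'k::field) pa"
  assumes "f \<in> FS" "g \<in> FS"
  shows "pmult tgt (psc c f) g = psc c (pmult tgt f g)"
proof (rule ext)
  fix p
  have fin: "finite (supp f)" "finite (supp g)" using assms by (auto simp: FS_def)
  have s: "supp (psc c f) \<subseteq> supp f" by (auto simp: supp_def psc_def)
  have "pmult tgt (psc c f) g p = (\<Sum>q\<in>supp f. \<Sum>r\<in>supp g. if pend tgt q = fst r \<and> (fst q, snd q @ snd r) = p then psc c f q * g r else 0)"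
    by (rule pmult_alt[OF fin s order.refl])
  then show "pmult tgt (psc c f) g p = psc c (pmult tgt f g) p"
    by (simp add: psc_def pmult_alt[OF fin order.refl order.refl] sum_distrib_left if_distrib mult.assoc cong: if_cong)
qed

lemma pmult_sc_right:
  fixes f g :: "('v,'e,'k::field) pa"
  assumes "f \<in> FS" "g \<in> FS"
  shows "pmult tgt f (psc c g) = psc c (pmult tgt f g)"
proof (rule ext)
  fix p
  have fin: "finite (supp f)" "finite (supp g)" using assms by (auto simp: FS_def)
  have s: "supp (psc c g) \<subseteq> supp g" by (auto simp: supp_def psc_def)
  have "pmult tgt f (psc c g) p = (\<Sum>q\<in>supp f. \<Sum>r\<in>supp g. if pend tgt q = fst r \<and> (fst q, snd q @ snd r) = p then f q * psc c g r else 0)"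
    by (rule pmult_alt[OF fin order.refl s])
  then show "pmult tgt f (psc c g) p = psc c (pmult tgt f g) p"
    by (simp add: psc_def pmult_alt[OF fin order.refl order.refl] sum_distrib_left if_distrib mult.left_commute cong: if_cong)
qed

lemma pmult_zero_left[simp]: "pmult tgt 0 g = 0"
  by (rule ext) (simp add: pmult_def)
lemma pmult_zero_right[simp]: "pmult tgt g 0 = 0"
  by (rule ext) (simp add: pmult_def)

lemma pmult_FS:
  fixes f g :: "('v,'e,'k::field) pa"
  assumes "f \<in> FS" "g \<in> FS"
  shows "pmult tgt f g \<in> FS"
proof -
  have "supp (pmult tgt f g) \<subseteq> (\<lambda>(q,r). (fst q, snd q @ snd r)) ` (supp f \<times> supp g)"
  proof
    fix p assume "p \<in> supp (pmult tgt f g)"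
    hence "pmult tgt f g p \<noteq> 0" by (simp add: supp_def)
    let ?X = "{(q, r). f q \<noteq> 0 \<and> g r \<noteq> 0 \<and> pend tgt q = fst r \<and> (fst q, snd q @ snd r) = p}"
    have "?X \<noteq> {}"
    proof
      assume X: "?X = {}"
      have "pmult tgt f g p = 0" unfolding pmult_def by (simp only: X sum.empty)
      thus False using \<open>pmult tgt f g p \<noteq> 0\<close> by simp
    qed
    then obtain q r where "f q \<noteq> 0" "g r \<noteq> 0" "(fst q, snd q @ snd r) = p"
      by blast
    thus "p \<in> (\<lambda>(q,r). (fst q, snd q @ snd r)) ` (supp f \<times> supp g)"
      by (force simp: supp_def)
  qed
  moreover have "finite ((\<lambda>(q,r). (fst q, snd q @ snd r)) ` (supp f \<times> supp g))"
    using assms by (auto simp: FS_def)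
  ultimately show ?thesis by (auto simp: FS_def intro: finite_subset)
qed

lemma pmult_sum_left:
  fixes g :: "('v,'e,'k::field) pa"
  assumes "finite A" "\<And>i. i \<in> A \<Longrightarrow> F i \<in> FS" "g \<in> FS"
  shows "pmult tgt (sum F A) g = (\<Sum>i\<in>A. pmult tgt (F i) g)"
  using assms by (induction A rule: finite_induct) (auto simp: pmult_add_left FS_sum)

lemma pmult_sum_right:
  fixes g :: "('v,'e,'k::field) pa"
  assumes "finite A" "\<And>i. i \<in> A \<Longrightarrow> F i \<in> FS" "g \<in> FS"
  shows "pmult tgt g (sum F A) = (\<Sum>i\<in>A. pmult tgt g (F i))"
  using assms by (induction A rule: finite_induct) (auto simp: pmult_add_right FS_sum)

lemma expand:
  fixes f :: "('v,'e,'k::field) pa"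
  assumes "f \<in> FS"
  shows "f = (\<Sum>p\<in>supp f. psc (f p) (delta p))"
proof (rule ext)
  fix x
  have "(\<Sum>p\<in>supp f. psc (f p) (delta p)) x = (\<Sum>p\<in>supp f. if p = x then f p else 0)"
    unfolding sum_fun_apply psc_def delta_def by (rule sum.cong) auto
  also have "\<dots> = f x" using assms by (simp add: FS_def supp_def)
  finally show "f x = (\<Sum>p\<in>supp f. psc (f p) (delta p)) x" by simp
qed

lemma FS_psc_delta: "psc c (delta p) \<in> FS" by (simp add: FS_sc FS_delta)

lemma lin_left:
  fixes f g :: "('v,'e,'k::field) pa"
  assumes "f \<in> FS" "g \<in> FS"
  shows "pmult tgt f g = (\<Sum>a\<in>supp f. psc (f a) (pmult tgt (delta a) g))"
  apply (subst expand[OF assms(1)])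
  using assms by (simp add: pmult_sum_left FS_psc_delta pmult_sc_left FS_delta supp_FS)

lemma lin_right:
  fixes f g :: "('v,'e,'k::field) pa"
  assumes "f \<in> FS" "g \<in> FS"
  shows "pmult tgt g f = (\<Sum>a\<in>supp f. psc (f a) (pmult tgt g (delta a)))"
  apply (subst expand[OF assms(1)])
  using assms by (simp add: pmult_sum_right FS_psc_delta pmult_sc_right FS_delta supp_FS)

lemma pend_app: "pend tgt (v, xs @ ys) = (if ys = [] then pend tgt (v, xs) else tgt (last ys))"
  by (simp add: pend_def)

lemma assoc_delta:
  "pmult tgt (pmult tgt (delta a) (delta b)) (delta c :: ('v,'e,'k::field) pa)
   = pmult tgt (delta a) (pmult tgt (delta b) (delta c))"
  by (auto simp: pmult_delta pend_app) (auto simp: pend_def)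

lemma psc_sum: "psc (c::'k::field) (sum F A) = (\<Sum>i\<in>A. psc c (F i))"
  by (rule ext) (simp add: psc_def sum_fun_apply sum_distrib_left[symmetric])

lemma FS_pd: "f \<in> FS \<Longrightarrow> g \<in> FS \<Longrightarrow> psc c (pmult tgt f g) \<in> FS"
  by (simp add: FS_sc pmult_FS)

lemma sum_pmult_left:
  fixes g :: "('v,'e,'k::field) pa"
  assumes "finite A" "\<And>i. i \<in> A \<Longrightarrow> F i \<in> FS" "g \<in> FS"
  shows "pmult tgt (\<Sum>i\<in>A. psc (c i) (F i)) g = (\<Sum>i\<in>A. psc (c i) (pmult tgt (F i) g))"
  using assms by (simp add: pmult_sum_left FS_sc pmult_sc_left)

lemma sum_pmult_right:
  fixes g :: "('v,'e,'k::field) pa"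
  assumes "finite A" "\<And>i. i \<in> A \<Longrightarrow> F i \<in> FS" "g \<in> FS"
  shows "pmult tgt g (\<Sum>i\<in>A. psc (c i) (F i)) = (\<Sum>i\<in>A. psc (c i) (pmult tgt g (F i)))"
  using assms by (simp add: pmult_sum_right FS_sc pmult_sc_right)

lemma pmult_assoc:
  fixes f g h :: "('v,'e,'k::field) pa"
  assumes "f \<in> FS" "g \<in> FS" "h \<in> FS"
  shows "pmult tgt (pmult tgt f g) h = pmult tgt f (pmult tgt g h)"
proof -
  have dd: "pmult tgt (pmult tgt (delta a) (delta b)) h = pmult tgt (delta a) (pmult tgt (delta b) h)" for a b
  proof -
    have 1: "pmult tgt (pmult tgt (delta a) (delta b)) h = (\<Sum>c\<in>supp h. psc (h c) (pmult tgt (pmult tgt (delta a) (delta b)) (delta c)))"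
      by (rule lin_right[OF assms(3)]) (simp add: pmult_FS FS_delta)
    have 2: "pmult tgt (delta b) h = (\<Sum>c\<in>supp h. psc (h c) (pmult tgt (delta b) (delta c)))"
      by (rule lin_right[OF assms(3)]) (simp add: FS_delta)
    show ?thesis unfolding 1 2
      by (subst sum_pmult_right) (auto simp: supp_FS assms FS_delta pmult_FS assoc_delta)
  qed
  have d: "pmult tgt (pmult tgt (delta a) g) h = pmult tgt (delta a) (pmult tgt g h)" for a
  proof -
    have 1: "pmult tgt (delta a) g = (\<Sum>b\<in>supp g. psc (g b) (pmult tgt (delta a) (delta b)))"
      by (rule lin_right[OF assms(2)]) (simp add: FS_delta)
    have 2: "pmult tgt g h = (\<Sum>b\<in>supp g. psc (g b) (pmult tgt (delta b) h))"
      by (rule lin_left[OF assms(2) assms(3)])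
    have "pmult tgt (\<Sum>b\<in>supp g. psc (g b) (pmult tgt (delta a) (delta b))) h
       = (\<Sum>b\<in>supp g. psc (g b) (pmult tgt (pmult tgt (delta a) (delta b)) h))"
      by (rule sum_pmult_left) (auto simp: supp_FS assms FS_delta pmult_FS)
    also have "\<dots> = (\<Sum>b\<in>supp g. psc (g b) (pmult tgt (delta a) (pmult tgt (delta b) h)))"
      by (simp add: dd)
    also have "\<dots> = pmult tgt (delta a) (\<Sum>b\<in>supp g. psc (g b) (pmult tgt (delta b) h))"
      by (rule sum_pmult_right[symmetric]) (auto simp: supp_FS assms FS_delta pmult_FS)
    finally show ?thesis unfolding 1 2 .
  qed
  have 1: "pmult tgt f g = (\<Sum>a\<in>supp f. psc (f a) (pmult tgt (delta a) g))"
    by (rule lin_left[OF assms(1) assms(2)])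
  have 2: "pmult tgt f (pmult tgt g h) = (\<Sum>a\<in>supp f. psc (f a) (pmult tgt (delta a) (pmult tgt g h)))"
    by (rule lin_left[OF assms(1)]) (simp add: assms pmult_FS)
  have "pmult tgt (\<Sum>a\<in>supp f. psc (f a) (pmult tgt (delta a) g)) h
      = (\<Sum>a\<in>supp f. psc (f a) (pmult tgt (pmult tgt (delta a) g) h))"
    by (rule sum_pmult_left) (auto simp: supp_FS assms FS_delta pmult_FS)
  also have "\<dots> = (\<Sum>a\<in>supp f. psc (f a) (pmult tgt (delta a) (pmult tgt g h)))"
    by (simp only: d)
  finally show ?thesis unfolding 1 2 .
qed


lemma is_path_nil: "is_path V E src tgt (v, []) \<longleftrightarrow> v \<in> V"
  by (simp add: is_path_def)

lemma is_path_cons: assumes "\<forall>e\<in>E. tgt e \<in> V"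
  shows "is_path V E src tgt (v, e # es) \<longleftrightarrow>
   v \<in> V \<and> e \<in> E \<and> src e = v \<and> is_path V E src tgt (tgt e, es)"
proof -
  have idx: "(\<forall>i. Suc i < length (e # es) \<longrightarrow> tgt ((e # es) ! i) = src ((e # es) ! Suc i)) \<longleftrightarrow>
     (es \<noteq> [] \<longrightarrow> tgt e = src (hd es)) \<and> (\<forall>i. Suc i < length es \<longrightarrow> tgt (es ! i) = src (es ! Suc i))"
    apply (rule iffI)
     apply (intro conjI impI allI)
      apply (drule spec[of _ 0]; cases es; simp)
     apply (drule_tac x="Suc i" in spec; simp)
    apply (intro allI impI)
    subgoal for i by (cases i; cases es; auto)
    done
  show ?thesis unfolding is_path_def idx
    using assms by (cases es) (auto simp: nth_Cons split: nat.splits)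
qed


lemma psc_add: "psc c (f + g) = psc c f + psc (c::'k::field) g"
  by (rule ext) (simp add: psc_def distrib_left)
lemma psc_minus1: "psc (-1::'k::field) f = - f"
  by (rule ext) (simp add: psc_def)
lemma psc_0[simp]: "psc (0::'k::field) f = 0"
  by (rule ext) (simp add: psc_def)
lemma psc_1[simp]: "psc (1::'k::field) f = f"
  by (rule ext) (simp add: psc_def)
lemma psc_zero[simp]: "psc (c::'k::field) 0 = 0"
  by (rule ext) (simp add: psc_def)
lemma psc_psc: "psc (c::'k::field) (psc d f) = psc (c * d) f"
  by (rule ext) (simp add: psc_def)
lemma psc_diff: "psc c (f - g) = psc c f - psc (c::'k::field) g"
  by (rule ext) (simp add: psc_def right_diff_distrib)
lemma psc_add_left: "psc (c + d) f = psc c f + psc (d::'k::field) f"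
  by (rule ext) (simp add: psc_def distrib_right)
lemma psc_uminus: "psc (c::'k::field) (- f) = - psc c f"
  by (rule ext) (simp add: psc_def)

definition posl :: "'e \<Rightarrow> 'e list \<Rightarrow> nat set" where
  "posl r xs = {i. i < length xs \<and> xs ! i = r}"
definition substl :: "'e list \<Rightarrow> 'e list \<Rightarrow> nat \<Rightarrow> 'e list" where
  "substl ss xs i = take i xs @ ss @ drop (Suc i) xs"
definition Ld :: "'e \<Rightarrow> 'e list \<Rightarrow> ('v,'e) path \<Rightarrow> ('v,'e,'k::field) pa" where
  "Ld r ss p = (\<Sum>i\<in>posl r (snd p). delta (fst p, substl ss (snd p) i))"
definition Lop :: "'e \<Rightarrow> 'e list \<Rightarrow> ('v,'e,'k::field) pa \<Rightarrow> ('v,'e,'k) pa" where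
  "Lop r ss f = (\<Sum>a\<in>supp f. psc (f a) (Ld r ss a))"

lemma finite_posl: "finite (posl r xs)" by (simp add: posl_def)

lemma posl_app: "posl r (xs @ ys) = posl r xs \<union> (\<lambda>j. length xs + j) ` posl r ys"
proof (rule set_eqI)
  fix i
  show "i \<in> posl r (xs @ ys) \<longleftrightarrow> i \<in> posl r xs \<union> (\<lambda>j. length xs + j) ` posl r ys"
  proof (cases "i < length xs")
    case True
    then show ?thesis by (auto simp: posl_def nth_append)
  next
    case False
    then obtain j where j: "i = length xs + j" by (metis le_Suc_ex not_less)
    then show ?thesis by (auto simp: posl_def nth_append)
  qed
qed

lemma substl_app1: "i < length xs \<Longrightarrow> substl ss (xs @ ys) i = substl ss xs i @ ys"
  by (simp add: substl_def)
lemma substl_app2: "substl ss (xs @ ys) (length xs + j) = xs @ substl ss ys j"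
  by (simp add: substl_def)

lemma Ld_FS: "Ld r ss p \<in> FS" unfolding Ld_def by (intro FS_sum FS_delta)

lemma Lop_alt: assumes "finite A" "supp f \<subseteq> A"
  shows "Lop r ss f = (\<Sum>a\<in>A. psc (f a) (Ld r ss a))"
  unfolding Lop_def using assms
  by (intro sum.mono_neutral_left) (auto simp: supp_def)

lemma Lop_FS: "Lop r ss f \<in> FS" unfolding Lop_def by (intro FS_sum FS_sc Ld_FS)

lemma Lop_add: assumes "f \<in> FS" "g \<in> FS" shows "Lop r ss (f + g) = Lop r ss f + Lop r ss g"
proof -
  have fin: "finite (supp f \<union> supp g)" using assms by (simp add: FS_def)
  have s: "supp (f + g) \<subseteq> supp f \<union> supp g" "supp f \<subseteq> supp f \<union> supp g" "supp g \<subseteq> supp f \<union> supp g"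
    by (auto simp: supp_def)
  show ?thesis unfolding Lop_alt[OF fin s(1)] Lop_alt[OF fin s(2)] Lop_alt[OF fin s(3)]
    by (simp add: psc_add_left sum.distrib)
qed

lemma Lop_sc: assumes "f \<in> FS" shows "Lop r ss (psc c f) = psc c (Lop r ss f)"
proof -
  have fin: "finite (supp f)" using assms by (simp add: FS_def)
  have s: "supp (psc c f) \<subseteq> supp f" by (auto simp: supp_def psc_def)
  have "Lop r ss (psc c f) = (\<Sum>a\<in>supp f. psc (psc c f a) (Ld r ss a))" by (rule Lop_alt[OF fin s])
  also have "\<dots> = psc c (Lop r ss f)" unfolding Lop_def psc_sum psc_psc
    by (simp add: psc_def[of c f])
  finally show ?thesis .
qed

lemma Lop_zero: "Lop r ss 0 = 0" by (simp add: Lop_def supp_def)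

lemma Lop_delta: "Lop r ss (delta p) = Ld r ss p"
  by (simp add: Lop_def supp_delta) (simp add: delta_def)

lemma Lop_sum: "finite A \<Longrightarrow> (\<And>i. i \<in> A \<Longrightarrow> F i \<in> FS) \<Longrightarrow> Lop r ss (sum F A) = (\<Sum>i\<in>A. Lop r ss (F i))"
  by (induction A rule: finite_induct) (auto simp: Lop_zero Lop_add FS_sum)

lemma Lop_sum_sc: "finite A \<Longrightarrow> (\<And>i. i \<in> A \<Longrightarrow> F i \<in> FS) \<Longrightarrow>
    Lop r ss (\<Sum>i\<in>A. psc (c i) (F i)) = (\<Sum>i\<in>A. psc (c i) (Lop r ss (F i)))"
  by (simp add: Lop_sum FS_sc Lop_sc)

lemma pend_app2: "pend tgt (v, xs @ ys) = pend tgt (pend tgt (v, xs), ys)"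
  by (cases ys) (auto simp: pend_def)

locale setting =
  fixes V :: "'v set" and E :: "'e set" and src tgt :: "'e \<Rightarrow> 'v"
    and I :: "('v,'e,'k::field) pa set" and Qb :: "('v,'e,'k) pa set set"
  assumes finV: "finite V" and finE: "finite E" and st: "\<forall>e\<in>E. src e \<in> V \<and> tgt e \<in> V"
    and idl: "is_ideal V E src tgt I"
    and qb: "is_quot_basis V E src tgt I Qb"
    and qpath: "\<forall>q\<in>Qb. \<exists>p. is_path V E src tgt p \<and> q = cls I (delta p)"
begin

abbreviation P :: "('v,'e,'k) pa set" where "P \<equiv> PA V E src tgt"
abbreviation "path \<equiv> is_path V E src tgt"
abbreviation mul :: "('v,'e,'k) pa \<Rightarrow> ('v,'e,'k) pa \<Rightarrow> ('v,'e,'k) pa" where "mul \<equiv> pmult tgt"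

lemma path_cons: "path (v, e # es) \<longleftrightarrow> v \<in> V \<and> e \<in> E \<and> src e = v \<and> path (tgt e, es)"
  using is_path_cons[of E tgt V] st by blast

lemma path_fst: "path p \<Longrightarrow> fst p \<in> V" by (simp add: is_path_def)

lemma pend_cons: "pend tgt (v, e # es) = pend tgt (tgt e, es)"
  by (simp add: pend_def)

lemma path_app: "path (v, xs @ ys) \<longleftrightarrow> path (v, xs) \<and> path (pend tgt (v, xs), ys)"
proof (induction xs arbitrary: v)
  case Nil
  then show ?case by (auto simp: is_path_nil pend_def dest: path_fst)
next
  case (Cons x xs)
  show ?case by (simp only: append_Cons path_cons Cons pend_cons) blast
qed

lemma path_pend: "path p \<Longrightarrow> pend tgt p \<in> V"
  using path_app[of "fst p" "snd p" "[]"] by (simp add: is_path_nil)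

lemma P_FS: "f \<in> P \<Longrightarrow> f \<in> FS"
  by (simp add: PA_def FS_def supp_def)

lemma P_supp_path: "f \<in> P \<Longrightarrow> a \<in> supp f \<Longrightarrow> path a"
  by (cases a) (simp add: PA_def supp_def)

lemma P_iff: "f \<in> P \<longleftrightarrow> f \<in> FS \<and> (\<forall>a\<in>supp f. path a)"
  by (auto simp: PA_def FS_def supp_def)

lemma P_add: "f \<in> P \<Longrightarrow> g \<in> P \<Longrightarrow> f + g \<in> P"
  unfolding P_iff apply (intro conjI) apply (simp add: FS_add) apply (auto simp: supp_def) by (metis add.left_neutral)
lemma P_zero: "0 \<in> P"
  unfolding P_iff by (auto simp: FS_zero supp_def)
lemma P_sc: "f \<in> P \<Longrightarrow> psc c f \<in> P"
  unfolding P_iff apply (intro conjI) apply (simp add: FS_sc) by (auto simp: supp_def psc_def)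
lemma P_uminus: "f \<in> P \<Longrightarrow> - f \<in> P"
  unfolding P_iff by (auto simp: FS_uminus supp_def)
lemma P_diff: "f \<in> P \<Longrightarrow> g \<in> P \<Longrightarrow> f - g \<in> P"
  using P_add[of f "- g"] P_uminus[of g] by simp
lemma P_sum: "(\<And>i. i \<in> A \<Longrightarrow> F i \<in> P) \<Longrightarrow> sum F A \<in> P"
  by (induction A rule: infinite_finite_induct) (auto simp: P_zero P_add)
lemma delta_P: "path p \<Longrightarrow> delta p \<in> P"
  unfolding P_iff by (simp add: FS_delta supp_delta)

lemma mul_delta_P: "path a \<Longrightarrow> path b \<Longrightarrow> mul (delta a) (delta b) \<in> P"
  by (cases a; cases b) (auto simp: pmult_delta P_zero intro!: delta_P simp: path_app)

lemma P_mul: assumes "f \<in> P" "g \<in> P" shows "mul f g \<in> P"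
proof -
  have "mul f g = (\<Sum>a\<in>supp f. psc (f a) (mul (delta a) g))"
    using assms by (simp add: lin_left P_FS)
  also have "\<dots> = (\<Sum>a\<in>supp f. psc (f a) (\<Sum>b\<in>supp g. psc (g b) (mul (delta a) (delta b))))"
    using assms by (simp add: lin_right P_FS FS_delta)
  also have "\<dots> \<in> P"
    by (auto intro!: P_sum P_sc mul_delta_P intro: P_supp_path[OF assms(1)] P_supp_path[OF assms(2)])
  finally show ?thesis .
qed

lemma mul_add_left: "f \<in> P \<Longrightarrow> g \<in> P \<Longrightarrow> h \<in> P \<Longrightarrow> mul (f + g) h = mul f h + mul g h"
  by (simp add: pmult_add_left P_FS)
lemma mul_add_right: "f \<in> P \<Longrightarrow> g \<in> P \<Longrightarrow> h \<in> P \<Longrightarrow> mul h (f + g) = mul h f + mul h g"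
  by (simp add: pmult_add_right P_FS)
lemma mul_sc_left: "f \<in> P \<Longrightarrow> g \<in> P \<Longrightarrow> mul (psc c f) g = psc c (mul f g)"
  by (simp add: pmult_sc_left P_FS)
lemma mul_sc_right: "f \<in> P \<Longrightarrow> g \<in> P \<Longrightarrow> mul f (psc c g) = psc c (mul f g)"
  by (simp add: pmult_sc_right P_FS)
lemma mul_uminus_left: "f \<in> P \<Longrightarrow> g \<in> P \<Longrightarrow> mul (- f) g = - mul f g"
  using mul_sc_left[of f g "-1"] by (simp add: psc_minus1)
lemma mul_uminus_right: "f \<in> P \<Longrightarrow> g \<in> P \<Longrightarrow> mul f (- g) = - mul f g"
  using mul_sc_right[of f g "-1"] by (simp add: psc_minus1)
lemma mul_diff_left: "f \<in> P \<Longrightarrow> g \<in> P \<Longrightarrow> h \<in> P \<Longrightarrow> mul (f - g) h = mul f h - mul g h"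
  using mul_add_left[of f "- g" h] by (simp add: P_uminus mul_uminus_left)
lemma mul_diff_right: "f \<in> P \<Longrightarrow> g \<in> P \<Longrightarrow> h \<in> P \<Longrightarrow> mul h (f - g) = mul h f - mul h g"
  using mul_add_right[of f "- g" h] by (simp add: P_uminus mul_uminus_right)
lemma mul_assoc: "f \<in> P \<Longrightarrow> g \<in> P \<Longrightarrow> h \<in> P \<Longrightarrow> mul (mul f g) h = mul f (mul g h)"
  by (simp add: pmult_assoc P_FS)
lemma mul_sum_left: "finite A \<Longrightarrow> (\<And>i. i \<in> A \<Longrightarrow> F i \<in> P) \<Longrightarrow> g \<in> P \<Longrightarrow> mul (sum F A) g = (\<Sum>i\<in>A. mul (F i) g)"
  by (simp add: pmult_sum_left P_FS)
lemma mul_sum_right: "finite A \<Longrightarrow> (\<And>i. i \<in> A \<Longrightarrow> F i \<in> P) \<Longrightarrow> g \<in> P \<Longrightarrow> mul g (sum F A) = (\<Sum>i\<in>A. mul g (F i))"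
  by (simp add: pmult_sum_right P_FS)

lemma I_P: "I \<subseteq> P" using idl by (simp add: is_ideal_def)
lemma I_zero: "0 \<in> I" using idl by (simp add: is_ideal_def zero_fun_def)
lemma I_add: "i \<in> I \<Longrightarrow> j \<in> I \<Longrightarrow> i + j \<in> I" using idl by (simp add: is_ideal_def padd_eq)
lemma I_sc: "i \<in> I \<Longrightarrow> psc c i \<in> I" using idl by (simp add: is_ideal_def)
lemma I_mulL: "x \<in> P \<Longrightarrow> i \<in> I \<Longrightarrow> mul x i \<in> I" using idl by (simp add: is_ideal_def)
lemma I_mulR: "x \<in> P \<Longrightarrow> i \<in> I \<Longrightarrow> mul i x \<in> I" using idl by (simp add: is_ideal_def)
lemma I_uminus: "i \<in> I \<Longrightarrow> - i \<in> I" using I_sc[of i "-1"] by (simp add: psc_minus1)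
lemma I_diff: "i \<in> I \<Longrightarrow> j \<in> I \<Longrightarrow> i - j \<in> I" using I_add[of i "- j"] I_uminus[of j] by simp
lemma I_sum: "(\<And>a. a \<in> A \<Longrightarrow> F a \<in> I) \<Longrightarrow> sum F A \<in> I"
  by (induction A rule: infinite_finite_induct) (auto simp: I_zero I_add)
lemma I_PP: "i \<in> I \<Longrightarrow> i \<in> P" using I_P by auto

abbreviation "cl \<equiv> cls I"

lemma cls_alt: "cl x = {x + i | i. i \<in> I}" by (simp add: cls_def padd_eq)

lemma in_cls: "x \<in> cl x" unfolding cls_alt using I_zero by force

lemma cls_eq: "cl x = cl y \<longleftrightarrow> x - y \<in> I"
proof
  assume "cl x = cl y"
  then obtain i where "i \<in> I" "x = y + i" using in_cls[of x] unfolding cls_alt by auto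
  thus "x - y \<in> I" by simp
next
  assume h: "x - y \<in> I"
  show "cl x = cl y"
  proof (unfold cls_alt, safe)
    fix i assume "i \<in> I"
    thus "\<exists>j. x + i = y + j \<and> j \<in> I" using h by (intro exI[of _ "(x - y) + i"]) (auto intro: I_add)
  next
    fix i assume "i \<in> I"
    thus "\<exists>j. y + i = x + j \<and> j \<in> I" using h I_uminus[OF h]
      by (intro exI[of _ "(y - x) + i"]) (auto intro: I_add)
  qed
qed

lemma cls_zero: "cl 0 = I" unfolding cls_alt by auto

lemma cls_eq_I: "cl x = I \<longleftrightarrow> x \<in> I"
  using cls_eq[of x 0] by (simp add: cls_zero)

lemma in_cls_iff: "z \<in> cl y \<longleftrightarrow> z - y \<in> I"
  unfolding cls_alt by (auto simp: algebra_simps) (metis diff_add_cancel)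

lemma qadd_cls: "qadd (cl x) (cl y) = cl (x + y)"
proof (rule set_eqI)
  fix z
  have "z \<in> qadd (cl x) (cl y) \<longleftrightarrow> (\<exists>a b. z = a + b \<and> a - x \<in> I \<and> b - y \<in> I)"
    by (auto simp: qadd_def padd_eq in_cls_iff)
  also have "\<dots> \<longleftrightarrow> z - (x + y) \<in> I"
  proof
    assume "\<exists>a b. z = a + b \<and> a - x \<in> I \<and> b - y \<in> I"
    then obtain a b where "z = a + b" "a - x \<in> I" "b - y \<in> I" by blast
    moreover have e: "z - (x + y) = (a - x) + (b - y)" using \<open>z = a + b\<close> by (simp add: algebra_simps)
    ultimately show "z - (x + y) \<in> I" unfolding e by (intro I_add)
  next
    assume "z - (x + y) \<in> I"
    thus "\<exists>a b. z = a + b \<and> a - x \<in> I \<and> b - y \<in> I"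
      using I_zero by (intro exI[of _ "z - y"] exI[of _ y]) (auto simp: algebra_simps)
  qed
  finally show "z \<in> qadd (cl x) (cl y) \<longleftrightarrow> z \<in> cl (x + y)" by (simp add: in_cls_iff)
qed

lemma qscale_cls: "qscale I c (cl x) = cl (psc c x)"
proof (rule set_eqI)
  fix z
  have "z \<in> qscale I c (cl x) \<longleftrightarrow> (\<exists>a i. z = psc c a + i \<and> a - x \<in> I \<and> i \<in> I)"
    by (auto simp: qscale_def padd_eq in_cls_iff)
  also have "\<dots> \<longleftrightarrow> z - psc c x \<in> I"
  proof
    assume "\<exists>a i. z = psc c a + i \<and> a - x \<in> I \<and> i \<in> I"
    then obtain a i where "z = psc c a + i" "a - x \<in> I" "i \<in> I" by blast
    moreover have e: "z - psc c x = psc c (a - x) + i" using \<open>z = psc c a + i\<close> by (simp add: psc_diff algebra_simps)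
    ultimately show "z - psc c x \<in> I" unfolding e by (intro I_add I_sc)
  next
    assume "z - psc c x \<in> I"
    thus "\<exists>a i. z = psc c a + i \<and> a - x \<in> I \<and> i \<in> I"
      using I_zero by (intro exI[of _ x] exI[of _ "z - psc c x"]) (auto simp: algebra_simps)
  qed
  finally show "z \<in> qscale I c (cl x) \<longleftrightarrow> z \<in> cl (psc c x)" by (simp add: in_cls_iff)
qed

lemma qmult_cls: assumes "x \<in> P" "y \<in> P" shows "qmult tgt I (cl x) (cl y) = cl (mul x y)"
proof (rule set_eqI)
  fix z
  have "z \<in> qmult tgt I (cl x) (cl y) \<longleftrightarrow> (\<exists>a b k. z = mul a b + k \<and> a - x \<in> I \<and> b - y \<in> I \<and> k \<in> I)"
    by (auto simp: qmult_def padd_eq in_cls_iff)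
  also have "\<dots> \<longleftrightarrow> z - mul x y \<in> I"
  proof
    assume "\<exists>a b k. z = mul a b + k \<and> a - x \<in> I \<and> b - y \<in> I \<and> k \<in> I"
    then obtain a b k where z: "z = mul a b + k" and ijk: "a - x \<in> I" "b - y \<in> I" "k \<in> I" by blast
    define i where "i = a - x"
    define j where "j = b - y"
    have a: "a = x + i" and b: "b = y + j" by (simp_all add: i_def j_def)
    have ij: "i \<in> I" "j \<in> I" using ijk by (simp_all add: i_def j_def)
    hence PP: "i \<in> P" "j \<in> P" by (auto simp: I_PP)
    have "z - mul x y = mul i y + mul x j + mul i j + k"
      using assms PP unfolding z a b by (simp add: mul_add_left mul_add_right P_add algebra_simps)
    moreover have "mul i y + mul x j + mul i j + k \<in> I"
      using ij ijk assms PP by (intro I_add I_mulL I_mulR) auto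
    ultimately show "z - mul x y \<in> I" by simp
  next
    assume "z - mul x y \<in> I"
    thus "\<exists>a b k. z = mul a b + k \<and> a - x \<in> I \<and> b - y \<in> I \<and> k \<in> I"
      using I_zero by (intro exI[of _ x] exI[of _ y] exI[of _ "z - mul x y"]) auto
  qed
  finally show "z \<in> qmult tgt I (cl x) (cl y) \<longleftrightarrow> z \<in> cl (mul x y)" by (simp add: in_cls_iff)
qed

lemma qsum_cls: assumes "finite S" shows "qsum I S (\<lambda>j. cl (F j)) = cl (\<Sum>j\<in>S. F j)"
  unfolding qsum_def padd_eq
proof safe
  fix f i assume f: "\<forall>j\<in>S. f j \<in> cl (F j)" and i: "i \<in> I"
  have "(\<lambda>p. \<Sum>j\<in>S. f j p) = (\<Sum>j\<in>S. f j)" by (rule ext) (simp add: sum_fun_apply)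
  also have "\<dots> = (\<Sum>j\<in>S. F j) + (\<Sum>j\<in>S. f j - F j)" by (simp add: sum_subtractf)
  finally have "(\<lambda>p. \<Sum>j\<in>S. f j p) + i = (\<Sum>j\<in>S. F j) + ((\<Sum>j\<in>S. f j - F j) + i)" by simp
  moreover have "(\<Sum>j\<in>S. f j - F j) + i \<in> I"
    using f i by (intro I_add I_sum) (auto simp: in_cls_iff)
  ultimately show "(\<lambda>p. \<Sum>j\<in>S. f j p) + i \<in> cl (sum F S)" unfolding cls_alt by blast
next
  fix x assume "x \<in> cl (sum F S)"
  then obtain i where "i \<in> I" "x = sum F S + i" unfolding cls_alt by blast
  moreover have "(\<lambda>p. \<Sum>j\<in>S. F j p) = (\<Sum>j\<in>S. F j)" by (rule ext) (simp add: sum_fun_apply)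
  ultimately show "\<exists>f i. x = (\<lambda>p. \<Sum>j\<in>S. f j p) + i \<and> (\<forall>j\<in>S. f j \<in> cl (F j)) \<and> i \<in> I"
    by (intro exI[of _ F] exI[of _ i]) (auto simp: in_cls)
qed


lemma qsum_cong: assumes "\<And>j. j \<in> S \<Longrightarrow> A j = B j" shows "qsum I S A = qsum I S B"
proof -
  have "(\<forall>j\<in>S. f j \<in> A j) = (\<forall>j\<in>S. f j \<in> B j)" for f using assms by auto
  thus ?thesis unfolding qsum_def by simp
qed

definition rho where "rho q = delta (qrep V E src tgt I q)"

lemma qrep_spec: assumes "q \<in> Qb" shows "path (qrep V E src tgt I q)" "cl (rho q) = q"
proof -
  obtain p where "path p" "q = cl (delta p)" using qpath assms by blast
  hence ex: "\<exists>p. path p \<and> cls I (delta p) = q" by blast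
  show "path (qrep V E src tgt I q)" "cl (rho q) = q"
    using someI_ex[OF ex] unfolding qrep_def rho_def by auto
qed

lemma rho_P: "q \<in> Qb \<Longrightarrow> rho q \<in> P"
  unfolding rho_def by (intro delta_P qrep_spec)

abbreviation Qc where "Qc \<equiv> Qcar V E src tgt I"

lemma Qc_iff: "A \<in> Qc \<longleftrightarrow> (\<exists>x\<in>P. A = cl x)" by (auto simp: Qcar_def)

lemma I_Qc: "I \<in> Qc" using P_zero cls_zero unfolding Qc_iff by metis

definition rp where "rp A = (SOME x. x \<in> P \<and> cl x = A)"

lemma rp: assumes "A \<in> Qc" shows "rp A \<in> P" "cl (rp A) = A"
proof -
  have ex: "\<exists>x. x \<in> P \<and> cl x = A" using assms unfolding Qc_iff by metis
  show "rp A \<in> P" "cl (rp A) = A" using someI_ex[OF ex] unfolding rp_def by auto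
qed

lemma basis_span: assumes "x \<in> P"
  shows "\<exists>S a. finite S \<and> S \<subseteq> Qb \<and> x - (\<Sum>q\<in>S. psc (a q) (rho q)) \<in> I"
proof -
  have "cl x \<in> Qc" using assms unfolding Qc_iff by blast
  moreover have "\<forall>A\<in>Qc. \<exists>S c. finite S \<and> S \<subseteq> Qb \<and> A = qsum I S (\<lambda>q. qscale I (c q) q)"
    using qb unfolding is_quot_basis_def by (elim conjE)
  ultimately obtain S c where S: "finite S" "S \<subseteq> Qb" "cl x = qsum I S (\<lambda>q. qscale I (c q) q)"
    by (elim ballE exE conjE) auto
  have "qsum I S (\<lambda>q. qscale I (c q) q) = qsum I S (\<lambda>q. cl (psc (c q) (rho q)))"
  proof (rule qsum_cong)
    fix q assume "q \<in> S"
    hence "q = cl (rho q)" using S(2) qrep_spec(2) by auto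
    thus "qscale I (c q) q = cl (psc (c q) (rho q))" by (metis qscale_cls)
  qed
  also have "\<dots> = cl (\<Sum>q\<in>S. psc (c q) (rho q))" using S(1) by (rule qsum_cls)
  finally have "cl x = cl (\<Sum>q\<in>S. psc (c q) (rho q))" using S(3) by simp
  hence "x - (\<Sum>q\<in>S. psc (c q) (rho q)) \<in> I" by (simp add: cls_eq)
  thus ?thesis using S(1,2) by blast
qed

lemma basis_indep: assumes "finite S" "S \<subseteq> Qb" "(\<Sum>q\<in>S. psc (a q) (rho q)) \<in> I" "q \<in> S"
  shows "a q = 0"
proof -
  have "qsum I S (\<lambda>q. qscale I (a q) q) = qsum I S (\<lambda>q. cl (psc (a q) (rho q)))"
  proof (rule qsum_cong)
    fix q assume "q \<in> S"
    hence "q = cl (rho q)" using assms(2) qrep_spec(2) by auto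
    thus "qscale I (a q) q = cl (psc (a q) (rho q))" by (metis qscale_cls)
  qed
  also have "\<dots> = cl (\<Sum>q\<in>S. psc (a q) (rho q))" using assms(1) by (rule qsum_cls)
  also have "\<dots> = I" using assms(3) by (simp add: cls_eq_I)
  moreover have "\<forall>S c. finite S \<and> S \<subseteq> Qb \<and> qsum I S (\<lambda>q. qscale I (c q) q) = I \<longrightarrow> (\<forall>q\<in>S. c q = 0)"
    using qb unfolding is_quot_basis_def by (elim conjE)
  ultimately show ?thesis using assms by blast
qed

lemma rho_notI: "q \<in> Qb \<Longrightarrow> rho q \<notin> I"
  using basis_indep[of "{q}" "\<lambda>_. 1" q] by auto

lemma mul_d_v: "mul (delta p) (delta (v, [])) = (if pend tgt p = v then delta p else 0)"
  by (simp add: pmult_delta)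
lemma mul_v_d: "mul (delta (v, [])) (delta p) = (if v = fst p then delta p else 0)"
  by (simp add: pmult_delta pend_def)

lemma rho_v: "mul (rho q) (delta (v, [])) = (if qh V E src tgt I q = v then rho q else 0)"
  by (simp add: rho_def qh_def mul_d_v)
lemma v_rho: "mul (delta (v, [])) (rho q) = (if qt V E src tgt I q = v then rho q else 0)"
  by (simp add: rho_def qt_def mul_v_d)

abbreviation Dq where "Dq \<equiv> Diff V E src tgt I"

lemma DiffD: assumes "D \<in> Dq"
  shows "x \<in> P \<Longrightarrow> D x \<in> Qc" "x \<notin> P \<Longrightarrow> D x = I"
    "x \<in> P \<Longrightarrow> y \<in> P \<Longrightarrow> D (x + y) = qadd (D x) (D y)"
    "x \<in> P \<Longrightarrow> D (psc c x) = qscale I c (D x)"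
    "x \<in> P \<Longrightarrow> y \<in> P \<Longrightarrow> D (mul x y) = qadd (qmult tgt I (D x) (cl y)) (qmult tgt I (cl x) (D y))"
  using assms unfolding Diff_def padd_eq by auto

lemma DiffI:
  assumes "\<And>x. x \<in> P \<Longrightarrow> D x \<in> Qc" "\<And>x. x \<notin> P \<Longrightarrow> D x = I"
    "\<And>x y. x \<in> P \<Longrightarrow> y \<in> P \<Longrightarrow> D (x + y) = qadd (D x) (D y)"
    "\<And>x c. x \<in> P \<Longrightarrow> D (psc c x) = qscale I c (D x)"
    "\<And>x y. x \<in> P \<Longrightarrow> y \<in> P \<Longrightarrow> D (mul x y) = qadd (qmult tgt I (D x) (cl y)) (qmult tgt I (cl x) (D y))"
  shows "D \<in> Dq"
  using assms unfolding Diff_def padd_eq by auto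

lemma D_Qc: "D \<in> Dq \<Longrightarrow> D x \<in> Qc"
  by (cases "x \<in> P") (auto simp: DiffD I_Qc)

lemma D_rp: "D \<in> Dq \<Longrightarrow> rp (D x) \<in> P" "D \<in> Dq \<Longrightarrow> cl (rp (D x)) = D x"
  using rp D_Qc by blast+

lemma D_zero: assumes "D \<in> Dq" shows "D 0 = I"
proof -
  have "D 0 = D (psc 0 0)" by simp
  also have "\<dots> = qscale I 0 (D 0)" using assms P_zero by (rule DiffD(4))
  also have "\<dots> = qscale I 0 (cl (rp (D 0)))" using D_rp(2)[OF assms] by simp
  also have "\<dots> = I" by (simp add: qscale_cls cls_zero)
  finally show ?thesis .
qed

lemma cl_sum_cong: assumes "finite J" "\<And>j. j \<in> J \<Longrightarrow> cl (u j) = cl (w j)"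
  shows "cl (\<Sum>j\<in>J. psc (c j) (u j)) = cl (\<Sum>j\<in>J. psc (c j) (w j))"
proof -
  have "(\<Sum>j\<in>J. psc (c j) (u j)) - (\<Sum>j\<in>J. psc (c j) (w j)) = (\<Sum>j\<in>J. psc (c j) (u j - w j))"
    by (simp add: sum_subtractf[symmetric] psc_diff)
  also have "\<dots> \<in> I" using assms by (intro I_sum I_sc) (simp add: cls_eq)
  finally show ?thesis by (simp add: cls_eq)
qed

definition LC :: "'j set \<Rightarrow> ('j \<Rightarrow> ('v,'e,'k) pa \<Rightarrow> ('v,'e,'k) pa set) \<Rightarrow> ('j \<Rightarrow> 'k) \<Rightarrow> ('v,'e,'k) pa \<Rightarrow> ('v,'e,'k) pa set"
  where "LC J \<Phi> c x = cl (\<Sum>j\<in>J. psc (c j) (rp (\<Phi> j x)))"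

lemma LC_Diff: assumes J: "finite J" and \<Phi>: "\<And>j. j \<in> J \<Longrightarrow> \<Phi> j \<in> Dq"
  shows "LC J \<Phi> c \<in> Dq"
proof -
  have rpP: "rp (\<Phi> j x) \<in> P" if "j \<in> J" for j x using \<Phi>[OF that] by (rule D_rp)
  have rpc: "cl (rp (\<Phi> j x)) = \<Phi> j x" if "j \<in> J" for j x using \<Phi>[OF that] by (rule D_rp)
  have SP: "(\<Sum>j\<in>J. psc (c j) (rp (\<Phi> j x))) \<in> P" for x using rpP by (auto intro!: P_sum P_sc)
  have h1: "LC J \<Phi> c x \<in> Qc" if "x \<in> P" for x unfolding LC_def Qc_iff using SP by blast
  have h2: "LC J \<Phi> c x = I" if "x \<notin> P" for x
  proof -
    have rI: "rp I \<in> I" using rp(2)[OF I_Qc] cls_eq_I by blast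
    have "\<forall>j\<in>J. \<Phi> j x = I" using \<Phi> DiffD(2) that by blast
    thus ?thesis unfolding LC_def cls_eq_I using rI by (intro I_sum I_sc) auto
  qed
  have h3: "LC J \<Phi> c (x + y) = qadd (LC J \<Phi> c x) (LC J \<Phi> c y)" if "x \<in> P" "y \<in> P" for x y
  proof -
    have "LC J \<Phi> c (x + y) = cl (\<Sum>j\<in>J. psc (c j) (rp (\<Phi> j x) + rp (\<Phi> j y)))"
      unfolding LC_def using J
    proof (rule cl_sum_cong)
      fix j assume j: "j \<in> J"
      have "cl (rp (\<Phi> j (x + y))) = \<Phi> j (x + y)" by (rule rpc[OF j])
      also have "\<dots> = qadd (\<Phi> j x) (\<Phi> j y)" using \<Phi>[OF j] that by (rule DiffD(3))
      also have "\<dots> = qadd (cl (rp (\<Phi> j x))) (cl (rp (\<Phi> j y)))" by (simp only: rpc[OF j])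
      finally show "cl (rp (\<Phi> j (x + y))) = cl (rp (\<Phi> j x) + rp (\<Phi> j y))" by (simp only: qadd_cls)
    qed
    also have "\<dots> = qadd (LC J \<Phi> c x) (LC J \<Phi> c y)"
      unfolding LC_def qadd_cls by (simp add: psc_add sum.distrib)
    finally show ?thesis .
  qed
  have h4: "LC J \<Phi> c (psc d x) = qscale I d (LC J \<Phi> c x)" if "x \<in> P" for x d
  proof -
    have "LC J \<Phi> c (psc d x) = cl (\<Sum>j\<in>J. psc (c j) (psc d (rp (\<Phi> j x))))"
      unfolding LC_def using J
    proof (rule cl_sum_cong)
      fix j assume j: "j \<in> J"
      have "cl (rp (\<Phi> j (psc d x))) = \<Phi> j (psc d x)" by (rule rpc[OF j])
      also have "\<dots> = qscale I d (\<Phi> j x)" using \<Phi>[OF j] that by (rule DiffD(4))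
      also have "\<dots> = qscale I d (cl (rp (\<Phi> j x)))" by (simp only: rpc[OF j])
      finally show "cl (rp (\<Phi> j (psc d x))) = cl (psc d (rp (\<Phi> j x)))" by (simp only: qscale_cls)
    qed
    also have "\<dots> = qscale I d (LC J \<Phi> c x)"
    proof -
      have e: "psc (c j) (psc d r) = psc d (psc (c j) r)" for r j by (simp add: psc_psc mult.commute)
      show ?thesis unfolding LC_def qscale_cls psc_sum e ..
    qed
    finally show ?thesis .
  qed
  have h5: "LC J \<Phi> c (mul x y) = qadd (qmult tgt I (LC J \<Phi> c x) (cl y)) (qmult tgt I (cl x) (LC J \<Phi> c y))"
    if "x \<in> P" "y \<in> P" for x y
  proof -
    have "LC J \<Phi> c (mul x y) = cl (\<Sum>j\<in>J. psc (c j) (mul (rp (\<Phi> j x)) y + mul x (rp (\<Phi> j y))))"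
      unfolding LC_def using J
    proof (rule cl_sum_cong)
      fix j assume j: "j \<in> J"
      have "cl (rp (\<Phi> j (mul x y))) = \<Phi> j (mul x y)" by (rule rpc[OF j])
      also have "\<dots> = qadd (qmult tgt I (\<Phi> j x) (cl y)) (qmult tgt I (cl x) (\<Phi> j y))"
        using \<Phi>[OF j] that by (rule DiffD(5))
      also have "\<dots> = qadd (qmult tgt I (cl (rp (\<Phi> j x))) (cl y)) (qmult tgt I (cl x) (cl (rp (\<Phi> j y))))"
        by (simp only: rpc[OF j])
      also have "\<dots> = cl (mul (rp (\<Phi> j x)) y + mul x (rp (\<Phi> j y)))"
        using that rpP[OF j] by (simp add: qmult_cls qadd_cls)
      finally show "cl (rp (\<Phi> j (mul x y))) = cl (mul (rp (\<Phi> j x)) y + mul x (rp (\<Phi> j y)))" .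
    qed
    also have "(\<Sum>j\<in>J. psc (c j) (mul (rp (\<Phi> j x)) y + mul x (rp (\<Phi> j y))))
        = mul (\<Sum>j\<in>J. psc (c j) (rp (\<Phi> j x))) y + mul x (\<Sum>j\<in>J. psc (c j) (rp (\<Phi> j y)))"
    proof -
      have 1: "(\<Sum>j\<in>J. psc (c j) (mul (rp (\<Phi> j x)) y)) = mul (\<Sum>j\<in>J. psc (c j) (rp (\<Phi> j x))) y"
        by (rule sum_pmult_left[symmetric]) (use J that rpP in \<open>auto intro: P_FS\<close>)
      have 2: "(\<Sum>j\<in>J. psc (c j) (mul x (rp (\<Phi> j y)))) = mul x (\<Sum>j\<in>J. psc (c j) (rp (\<Phi> j y)))"
        by (rule sum_pmult_right[symmetric]) (use J that rpP in \<open>auto intro: P_FS\<close>)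
      show ?thesis unfolding 1[symmetric] 2[symmetric] psc_add sum.distrib ..
    qed
    also have "cl \<dots> = qadd (qmult tgt I (LC J \<Phi> c x) (cl y)) (qmult tgt I (cl x) (LC J \<Phi> c y))"
      unfolding LC_def using that SP by (simp add: qmult_cls qadd_cls)
    finally show ?thesis .
  qed
show ?thesis by (rule DiffI) (fact h1 h2 h3 h4 h5)+
qed

lemma LC_qsum: assumes "finite S" "S \<subseteq> Dq"
  shows "(\<lambda>x. qsum I S (\<lambda>F. qscale I (c F) (F x))) = LC S (\<lambda>F. F) c"
proof (rule ext)
  fix x
  have "qsum I S (\<lambda>F. qscale I (c F) (F x)) = qsum I S (\<lambda>F. cl (psc (c F) (rp (F x))))"
  proof (rule qsum_cong)
    fix F assume "F \<in> S"
    hence "F \<in> Dq" using assms by blast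
    hence "F x = cl (rp (F x))" by (simp add: D_rp)
    thus "qscale I (c F) (F x) = cl (psc (c F) (rp (F x)))" by (metis qscale_cls)
  qed
  also have "\<dots> = LC S (\<lambda>F. F) c x" unfolding LC_def using assms(1) by (rule qsum_cls)
  finally show "qsum I S (\<lambda>F. qscale I (c F) (F x)) = LC S (\<lambda>F. F) c x" .
qed

lemma LC_reindex: assumes "inj_on \<Phi> J"
  shows "LC (\<Phi> ` J) (\<lambda>F. F) c = LC J \<Phi> (\<lambda>j. c (\<Phi> j))"
  unfolding LC_def by (rule ext) (simp add: sum.reindex[OF assms])


section \<open>Agreement on generators\<close>

lemma path_single: "path (w, [e]) \<longleftrightarrow> w \<in> V \<and> e \<in> E \<and> src e = w"
  using path_cons[of w e "[]"] st by (auto simp: is_path_nil)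

lemma delta_snoc: assumes "path (v, xs @ [e])"
  shows "delta (v, xs @ [e]) = mul (delta (v, xs)) (delta (src e, [e]))"
    "path (v, xs)" "e \<in> E" "pend tgt (v, xs) = src e"
proof -
  have h: "path (v, xs)" "path (pend tgt (v, xs), [e])" using assms path_app by auto
  thus "path (v, xs)" "e \<in> E" "pend tgt (v, xs) = src e" using path_single by auto
  thus "delta (v, xs @ [e]) = mul (delta (v, xs)) (delta (src e, [e]))"
    by (simp add: pmult_delta)
qed

lemma D_path_agree:
  assumes D1: "D1 \<in> Dq" and D2: "D2 \<in> Dq"
    and gv: "\<forall>v\<in>V. D1 (delta (v, [])) = D2 (delta (v, []))"
    and ge: "\<forall>e\<in>E. D1 (delta (src e, [e])) = D2 (delta (src e, [e]))"
  shows "path (v, es) \<Longrightarrow> D1 (delta (v, es)) = D2 (delta (v, es))"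
proof (induction es rule: rev_induct)
  case Nil
  then show ?case using gv by (simp add: is_path_nil)
next
  case (snoc e xs)
  note d = delta_snoc[OF snoc.prems]
  have P1: "delta (v, xs) \<in> P" "delta (src e, [e]) \<in> P"
    using d by (auto intro!: delta_P simp: path_single st)
  show ?case unfolding d(1)
    using DiffD(5)[OF D1 P1] DiffD(5)[OF D2 P1] snoc.IH[OF d(2)] ge d(3) by simp
qed

lemma D_sum_agree:
  assumes D1: "D1 \<in> Dq" and D2: "D2 \<in> Dq"
    and pa: "\<And>a. a \<in> A \<Longrightarrow> path a \<Longrightarrow> D1 (delta a) = D2 (delta a)"
    and A: "finite A" "\<forall>a\<in>A. path a"
  shows "D1 (\<Sum>a\<in>A. psc (c a) (delta a)) = D2 (\<Sum>a\<in>A. psc (c a) (delta a))"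
  using A pa
proof (induction A rule: finite_induct)
  case empty
  then show ?case using D_zero[OF D1] D_zero[OF D2] by (simp only: sum.empty)
next
  case (insert a A)
  have P1: "psc (c a) (delta a) \<in> P" "(\<Sum>a\<in>A. psc (c a) (delta a)) \<in> P" "delta a \<in> P"
    using insert by (auto intro!: P_sc P_sum delta_P)
  have IH: "D1 (\<Sum>a\<in>A. psc (c a) (delta a)) = D2 (\<Sum>a\<in>A. psc (c a) (delta a))"
    using insert by auto
  have da: "D1 (delta a) = D2 (delta a)" using insert by auto
  show ?case
    by (simp only: sum.insert[OF insert(1,2)] DiffD(3)[OF D1 P1(1,2)] DiffD(3)[OF D2 P1(1,2)] DiffD(4)[OF D1 P1(3)] DiffD(4)[OF D2 P1(3)] IH da)
qed

lemma D_agree: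
  assumes D1: "D1 \<in> Dq" and D2: "D2 \<in> Dq"
    and gv: "\<forall>v\<in>V. D1 (delta (v, [])) = D2 (delta (v, []))"
    and ge: "\<forall>e\<in>E. D1 (delta (src e, [e])) = D2 (delta (src e, [e]))"
  shows "D1 = D2"
proof (rule ext)
  fix x
  show "D1 x = D2 x"
  proof (cases "x \<in> P")
    case True
    have x: "x = (\<Sum>a\<in>supp x. psc (x a) (delta a))" using True by (simp add: expand P_FS)
    have "D1 (\<Sum>a\<in>supp x. psc (x a) (delta a)) = D2 (\<Sum>a\<in>supp x. psc (x a) (delta a))"
    proof (rule D_sum_agree[OF D1 D2])
      fix a assume "path a"
      thus "D1 (delta a) = D2 (delta a)"
        using D_path_agree[OF D1 D2 gv ge, of "fst a" "snd a"] by simp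
    qed (use True in \<open>auto simp: P_FS supp_FS intro: P_supp_path\<close>)
    then show ?thesis using x by simp
  next
    case False
    then show ?thesis using DiffD(2)[OF D1] DiffD(2)[OF D2] by simp
  qed
qed

section \<open>Inner operators\<close>

abbreviation Din where "Din \<equiv> Dinner V E src tgt I"

lemma Dinner_cl: assumes "\<mu> \<in> P" "x \<in> P"
  shows "Din (cl \<mu>) x = cl (mul \<mu> x - mul x \<mu>)"
  using assms by (simp add: Dinner_def qmult_cls qscale_cls qadd_cls psc_minus1)

lemma Dinner_Diff: assumes mu: "\<mu> \<in> P" shows "Din (cl \<mu>) \<in> Dq"
proof -
  have h1: "Din (cl \<mu>) x \<in> Qc" if "x \<in> P" for x
    using that mu by (auto simp: Dinner_cl Qc_iff intro!: P_diff P_mul)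
  have h2: "Din (cl \<mu>) x = I" if "x \<notin> P" for x using that by (simp add: Dinner_def)
  have h3: "Din (cl \<mu>) (x + y) = qadd (Din (cl \<mu>) x) (Din (cl \<mu>) y)" if "x \<in> P" "y \<in> P" for x y
    using that mu by (simp add: Dinner_cl P_add qadd_cls mul_add_left mul_add_right algebra_simps)
  have h4: "Din (cl \<mu>) (psc c x) = qscale I c (Din (cl \<mu>) x)" if "x \<in> P" for x c
    using that mu by (simp add: Dinner_cl P_sc qscale_cls mul_sc_left mul_sc_right psc_diff)
  have h5: "Din (cl \<mu>) (mul x y) = qadd (qmult tgt I (Din (cl \<mu>) x) (cl y)) (qmult tgt I (cl x) (Din (cl \<mu>) y))"
    if "x \<in> P" "y \<in> P" for x y
  proof -
    have PP: "mul \<mu> x \<in> P" "mul x \<mu> \<in> P" "mul \<mu> y \<in> P" "mul y \<mu> \<in> P" using that mu by (auto intro: P_mul)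
    have "mul \<mu> (mul x y) - mul (mul x y) \<mu> = mul (mul \<mu> x - mul x \<mu>) y + mul x (mul \<mu> y - mul y \<mu>)"
      using that mu PP by (simp add: mul_diff_left mul_diff_right mul_assoc)
    thus ?thesis using that mu PP by (simp add: Dinner_cl P_mul qmult_cls qadd_cls P_diff)
  qed
  show ?thesis by (rule DiffI) (fact h1 h2 h3 h4 h5)+
qed


section \<open>The operators D_{r,s}\<close>

lemma subst_ok:
  assumes ss: "path (src r, ss)" "pend tgt (src r, ss) = tgt r"
    and p: "path (v, xs)" and i: "i \<in> posl r xs"
  shows "path (v, substl ss xs i)" "pend tgt (v, substl ss xs i) = pend tgt (v, xs)"
proof -
  have il: "i < length xs" "xs ! i = r" using i by (auto simp: posl_def)
  have xs: "xs = take i xs @ [r] @ drop (Suc i) xs" using il by (metis append_Cons append_Nil id_take_nth_drop)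
  have "path (v, take i xs @ [r] @ drop (Suc i) xs)" using p xs by simp
  hence h: "path (v, take i xs)" "path (pend tgt (v, take i xs), r # drop (Suc i) xs)"
    using path_app by auto
  hence h2: "pend tgt (v, take i xs) = src r" "path (tgt r, drop (Suc i) xs)" using path_cons by auto
  show "path (v, substl ss xs i)" unfolding substl_def
    using h(1) h2 ss by (simp add: path_app pend_app2)
  have "pend tgt (v, xs) = pend tgt (v, take i xs @ [r] @ drop (Suc i) xs)" using xs by simp
  also have "\<dots> = pend tgt (tgt r, drop (Suc i) xs)"
    by (simp only: pend_app2[of _ v "take i xs"] h2(1) append_Cons append_Nil pend_cons)
  finally show "pend tgt (v, substl ss xs i) = pend tgt (v, xs)" unfolding substl_def
    by (simp only: pend_app2[of _ v "take i xs"] h2(1) pend_app2[of _ "src r" ss] ss(2))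
qed

lemma Ld_P: assumes ss: "path (src r, ss)" "pend tgt (src r, ss) = tgt r" and p: "path p"
  shows "Ld r ss p \<in> P"
  unfolding Ld_def using subst_ok[OF ss, of "fst p" "snd p"] p by (intro P_sum delta_P) auto

lemma Lop_P: assumes ss: "path (src r, ss)" "pend tgt (src r, ss) = tgt r" and f: "f \<in> P"
  shows "Lop r ss f \<in> P"
  unfolding Lop_def using f by (intro P_sum P_sc Ld_P[OF ss] P_supp_path) auto

lemma Ld_mul: assumes ss: "path (src r, ss)" "pend tgt (src r, ss) = tgt r"
    and a: "path (v, xs)" and b: "path (w, ys)"
  shows "Lop r ss (mul (delta (v, xs)) (delta (w, ys))) = mul (Ld r ss (v, xs)) (delta (w, ys)) + mul (delta (v, xs)) (Ld r ss (w, ys))"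
proof -
  have 1: "mul (Ld r ss (v, xs)) (delta (w, ys)) = (\<Sum>i\<in>posl r xs. if pend tgt (v, xs) = w then delta (v, substl ss (xs @ ys) i) else 0)"
  proof -
    have "mul (Ld r ss (v, xs)) (delta (w, ys)) = (\<Sum>i\<in>posl r xs. mul (delta (v, substl ss xs i)) (delta (w, ys)))"
      unfolding Ld_def by (simp add: pmult_sum_left FS_delta finite_posl)
    also have "\<dots> = (\<Sum>i\<in>posl r xs. if pend tgt (v, xs) = w then delta (v, substl ss (xs @ ys) i) else 0)"
    proof (rule sum.cong[OF refl])
      fix i assume i: "i \<in> posl r xs"
      hence "i < length xs" by (simp add: posl_def)
      thus "mul (delta (v, substl ss xs i)) (delta (w, ys)) = (if pend tgt (v, xs) = w then delta (v, substl ss (xs @ ys) i) else 0)"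
        by (simp add: pmult_delta subst_ok(2)[OF ss a i] substl_app1)
    qed
    finally show ?thesis .
  qed
  have 2: "mul (delta (v, xs)) (Ld r ss (w, ys)) = (\<Sum>j\<in>posl r ys. if pend tgt (v, xs) = w then delta (v, substl ss (xs @ ys) (length xs + j)) else 0)"
  proof -
    have "mul (delta (v, xs)) (Ld r ss (w, ys)) = (\<Sum>i\<in>posl r ys. mul (delta (v, xs)) (delta (w, substl ss ys i)))"
      unfolding Ld_def by (simp add: pmult_sum_right FS_delta finite_posl)
    also have "\<dots> = (\<Sum>j\<in>posl r ys. if pend tgt (v, xs) = w then delta (v, substl ss (xs @ ys) (length xs + j)) else 0)"
    proof (rule sum.cong[OF refl])
      fix j
      show "mul (delta (v, xs)) (delta (w, substl ss ys j)) = (if pend tgt (v, xs) = w then delta (v, substl ss (xs @ ys) (length xs + j)) else 0)"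
        unfolding substl_app2 pmult_delta by simp
    qed
    finally show ?thesis .
  qed
  show ?thesis
  proof (cases "pend tgt (v, xs) = w")
    case True
    have d: "disjnt (posl r xs) ((\<lambda>j. length xs + j) ` posl r ys)" by (auto simp: posl_def disjnt_def)
    have "Lop r ss (mul (delta (v, xs)) (delta (w, ys))) = Ld r ss (v, xs @ ys)"
      using True by (simp add: pmult_delta Lop_delta)
    also have "\<dots> = (\<Sum>i\<in>posl r xs. delta (v, substl ss (xs @ ys) i)) + (\<Sum>j\<in>posl r ys. delta (v, substl ss (xs @ ys) (length xs + j)))"
      unfolding Ld_def using d
      by (simp add: posl_app sum.union_disjoint finite_posl disjnt_def sum.reindex inj_on_def)
    finally show ?thesis unfolding 1 2 using True by simp
  next
    case False
    then show ?thesis unfolding 1 2 by (simp add: pmult_delta Lop_zero)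
  qed
qed

lemma Lop_deriv: assumes ss: "path (src r, ss)" "pend tgt (src r, ss) = tgt r"
    and f: "f \<in> P" and g: "g \<in> P"
  shows "Lop r ss (mul f g) = mul (Lop r ss f) g + mul f (Lop r ss g)"
proof -
  have A: "Lop r ss (mul (delta a) g) = mul (Ld r ss a) g + mul (delta a) (Lop r ss g)" if a: "path a" for a
  proof -
    have "Lop r ss (mul (delta a) g) = Lop r ss (\<Sum>b\<in>supp g. psc (g b) (mul (delta a) (delta b)))"
      using g by (simp add: lin_right P_FS FS_delta)
    also have "\<dots> = (\<Sum>b\<in>supp g. psc (g b) (Lop r ss (mul (delta a) (delta b))))"
      using g by (intro Lop_sum_sc) (auto simp: supp_FS P_FS FS_delta pmult_FS)
    also have "\<dots> = (\<Sum>b\<in>supp g. psc (g b) (mul (Ld r ss a) (delta b) + mul (delta a) (Ld r ss b)))"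
      using Ld_mul[OF ss, of "fst a" "snd a" "fst b" "snd b" for b] a P_supp_path[OF g]
      by (intro sum.cong) auto
    also have "\<dots> = (\<Sum>b\<in>supp g. psc (g b) (mul (Ld r ss a) (delta b))) + (\<Sum>b\<in>supp g. psc (g b) (mul (delta a) (Ld r ss b)))"
      by (simp add: psc_add sum.distrib)
    also have "(\<Sum>b\<in>supp g. psc (g b) (mul (Ld r ss a) (delta b))) = mul (Ld r ss a) g"
      using g by (simp add: lin_right P_FS Ld_FS)
    also have "(\<Sum>b\<in>supp g. psc (g b) (mul (delta a) (Ld r ss b))) = mul (delta a) (Lop r ss g)"
      unfolding Lop_def using g by (intro sum_pmult_right[symmetric]) (auto simp: supp_FS P_FS FS_delta Ld_FS)
    finally show ?thesis .
  qed
  have "Lop r ss (mul f g) = Lop r ss (\<Sum>a\<in>supp f. psc (f a) (mul (delta a) g))"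
    using f g by (simp add: lin_left P_FS)
  also have "\<dots> = (\<Sum>a\<in>supp f. psc (f a) (Lop r ss (mul (delta a) g)))"
    using f g by (intro Lop_sum_sc) (auto simp: supp_FS P_FS FS_delta pmult_FS)
  also have "\<dots> = (\<Sum>a\<in>supp f. psc (f a) (mul (Ld r ss a) g + mul (delta a) (Lop r ss g)))"
    using A P_supp_path[OF f] by (intro sum.cong) auto
  also have "\<dots> = (\<Sum>a\<in>supp f. psc (f a) (mul (Ld r ss a) g)) + (\<Sum>a\<in>supp f. psc (f a) (mul (delta a) (Lop r ss g)))"
    by (simp add: psc_add sum.distrib)
  also have "(\<Sum>a\<in>supp f. psc (f a) (mul (Ld r ss a) g)) = mul (Lop r ss f) g"
    unfolding Lop_def using f g by (intro sum_pmult_left[symmetric]) (auto simp: supp_FS P_FS Ld_FS)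
  also have "(\<Sum>a\<in>supp f. psc (f a) (mul (delta a) (Lop r ss g))) = mul f (Lop r ss g)"
    using f by (simp add: lin_left P_FS Lop_FS)
  finally show ?thesis .
qed


definition Dr where "Dr r ss = (\<lambda>x. if x \<in> P then cl (Lop r ss x) else I)"

lemma Dr_Diff: assumes ss: "path (src r, ss)" "pend tgt (src r, ss) = tgt r"
  shows "Dr r ss \<in> Dq"
proof -
  have h1: "Dr r ss x \<in> Qc" if "x \<in> P" for x
    using that Lop_P[OF ss] by (auto simp: Dr_def Qc_iff)
  have h2: "Dr r ss x = I" if "x \<notin> P" for x using that by (simp add: Dr_def)
  have h3: "Dr r ss (x + y) = qadd (Dr r ss x) (Dr r ss y)" if "x \<in> P" "y \<in> P" for x y
    using that by (simp add: Dr_def P_add Lop_add P_FS qadd_cls)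
  have h4: "Dr r ss (psc c x) = qscale I c (Dr r ss x)" if "x \<in> P" for x c
    using that by (simp add: Dr_def P_sc Lop_sc P_FS qscale_cls)
  have h5: "Dr r ss (mul x y) = qadd (qmult tgt I (Dr r ss x) (cl y)) (qmult tgt I (cl x) (Dr r ss y))"
    if "x \<in> P" "y \<in> P" for x y
    using that Lop_P[OF ss] by (simp add: Dr_def P_mul Lop_deriv[OF ss] qmult_cls qadd_cls)
  show ?thesis by (rule DiffI) (fact h1 h2 h3 h4 h5)+
qed

lemma Dr_v: "v \<in> V \<Longrightarrow> Dr r ss (delta (v, [])) = I"
  by (simp add: Dr_def delta_P is_path_nil Lop_delta Ld_def posl_def cls_zero)

lemma Dr_e: "e \<in> E \<Longrightarrow> Dr r ss (delta (src e, [e])) = (if e = r then cl (delta (src r, ss)) else I)"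
proof -
  assume e: "e \<in> E"
  have P: "delta (src e, [e]) \<in> P" using e st by (intro delta_P) (simp add: path_single)
  have "posl r [e] = (if e = r then {0} else {})" by (auto simp: posl_def)
  thus ?thesis using P by (simp add: Dr_def Lop_delta Ld_def substl_def cls_zero)
qed

abbreviation Drs' where "Drs' \<equiv> Drs V E src tgt I"
abbreviation "qt' \<equiv> qt V E src tgt I"
abbreviation "qh' \<equiv> qh V E src tgt I"

lemma Drs_char:
  assumes r: "r \<in> E" and s: "s \<in> Qb" and par: "src r = qt' s" "tgt r = qh' s"
  shows "Drs' r s \<in> Dq" "Drs' r s (delta (src r, [r])) = s"
    "\<And>e. e \<in> E \<Longrightarrow> e \<noteq> r \<Longrightarrow> Drs' r s (delta (src e, [e])) = I"
    "\<And>v. v \<in> V \<Longrightarrow> Drs' r s (delta (v, [])) = I"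
proof -
  define ss where "ss = snd (qrep V E src tgt I s)"
  have qr: "qrep V E src tgt I s = (src r, ss)" using par(1) unfolding ss_def qt_def by (metis prod.collapse)
  have ssp: "path (src r, ss)" "pend tgt (src r, ss) = tgt r"
    using qrep_spec(1)[OF s] par(2) qr unfolding qh_def by auto
  have sv: "cl (delta (src r, ss)) = s" using qrep_spec(2)[OF s] qr by (simp add: rho_def)
  let ?Q = "\<lambda>D. D \<in> Dq \<and> D (delta (src r, [r])) = s
      \<and> (\<forall>e\<in>E - {r}. D (delta (src e, [e])) = I) \<and> (\<forall>v\<in>V. D (delta (v, [])) = I)"
  have Q: "?Q (Dr r ss)" using Dr_Diff[OF ssp] Dr_e r sv Dr_v by auto
  have "Drs' r s = Dr r ss" unfolding Drs_def
  proof (rule the_equality)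
    show "?Q (Dr r ss)" by (rule Q)
    fix D assume D: "?Q D"
    show "D = Dr r ss"
    proof (rule D_agree)
      show "D \<in> Dq" "Dr r ss \<in> Dq" using D Q by auto
      show "\<forall>v\<in>V. D (delta (v, [])) = Dr r ss (delta (v, []))" using D Q by auto
      show "\<forall>e\<in>E. D (delta (src e, [e])) = Dr r ss (delta (src e, [e]))"
      proof
        fix e assume "e \<in> E"
        thus "D (delta (src e, [e])) = Dr r ss (delta (src e, [e]))"
          using D Q by (cases "e = r") auto
      qed
    qed
  qed
  thus "Drs' r s \<in> Dq" "Drs' r s (delta (src r, [r])) = s"
    "\<And>e. e \<in> E \<Longrightarrow> e \<noteq> r \<Longrightarrow> Drs' r s (delta (src e, [e])) = I"
    "\<And>v. v \<in> V \<Longrightarrow> Drs' r s (delta (v, [])) = I" using Q by auto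
qed


abbreviation dv where "dv v \<equiv> delta (v, []) :: ('v,'e,'k) pa"

lemma dv_P: "v \<in> V \<Longrightarrow> dv v \<in> P" by (simp add: delta_P is_path_nil)

lemma dv_dv: "mul (dv u) (dv v) = (if u = v then dv u else 0)"
  by (simp add: mul_d_v pend_def)

lemma mul_unit: assumes f: "f \<in> P" shows "mul f (\<Sum>v\<in>V. dv v) = f"
proof -
  have "mul f (\<Sum>v\<in>V. dv v) = (\<Sum>v\<in>V. mul f (dv v))"
    using f finV by (simp add: mul_sum_right dv_P)
  also have "\<dots> = (\<Sum>v\<in>V. \<Sum>a\<in>supp f. psc (f a) (if pend tgt a = v then delta a else 0))"
    using f by (intro sum.cong refl) (simp add: lin_left P_FS FS_delta mul_d_v)
  also have "\<dots> = (\<Sum>a\<in>supp f. \<Sum>v\<in>V. psc (f a) (if pend tgt a = v then delta a else 0))"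
    by (rule sum.swap)
  also have "\<dots> = (\<Sum>a\<in>supp f. psc (f a) (delta a))"
  proof (rule sum.cong[OF refl])
    fix a assume "a \<in> supp f"
    hence "pend tgt a \<in> V" using f by (intro path_pend P_supp_path)
    thus "(\<Sum>v\<in>V. psc (f a) (if pend tgt a = v then delta a else 0)) = psc (f a) (delta a)"
      using finV by (simp add: if_distrib[of "psc (f a)"] cong: if_cong)
  qed
  also have "\<dots> = f" using f by (simp add: expand[symmetric] P_FS)
  finally show ?thesis .
qed

lemma cl_add_cong: "cl x = cl x' \<Longrightarrow> cl y = cl y' \<Longrightarrow> cl (x + y) = cl (x' + y')"
  by (metis qadd_cls)
lemma cl_uminus_cong: "cl x = cl x' \<Longrightarrow> cl (- x) = cl (- x')"
  by (metis qscale_cls psc_minus1)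
lemma cl_mul_left: "x \<in> P \<Longrightarrow> y \<in> P \<Longrightarrow> z \<in> P \<Longrightarrow> cl x = cl y \<Longrightarrow> cl (mul z x) = cl (mul z y)"
  by (metis qmult_cls)
lemma cl_mul_right: "x \<in> P \<Longrightarrow> y \<in> P \<Longrightarrow> z \<in> P \<Longrightarrow> cl x = cl y \<Longrightarrow> cl (mul x z) = cl (mul y z)"
  by (metis qmult_cls)
lemma cl_sum_cong1: "finite J \<Longrightarrow> (\<And>j. j \<in> J \<Longrightarrow> cl (u j) = cl (w j)) \<Longrightarrow> cl (sum u J) = cl (sum w J)"
  using cl_sum_cong[of J u w "\<lambda>_. 1"] by simp

lemma D_leib: assumes D: "D \<in> Dq" and xy: "x \<in> P" "y \<in> P"
  shows "D (mul x y) = cl (mul (rp (D x)) y + mul x (rp (D y)))"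
proof -
  have "D (mul x y) = qadd (qmult tgt I (D x) (cl y)) (qmult tgt I (cl x) (D y))" using D xy by (rule DiffD(5))
  also have "\<dots> = qadd (qmult tgt I (cl (rp (D x))) (cl y)) (qmult tgt I (cl x) (cl (rp (D y))))"
    by (simp only: D_rp(2)[OF D])
  also have "\<dots> = cl (mul (rp (D x)) y + mul x (rp (D y)))"
    using xy D_rp(1)[OF D] by (simp add: qmult_cls qadd_cls)
  finally show ?thesis .
qed

lemma vertex_inner:
  assumes D: "D \<in> Dq"
  defines "d \<equiv> \<lambda>v. rp (D (dv v))"
  defines "\<mu> \<equiv> (\<Sum>v\<in>V. mul (d v) (dv v))"
  shows "\<mu> \<in> P" "\<And>u. u \<in> V \<Longrightarrow> D (dv u) = cl (mul \<mu> (dv u) - mul (dv u) \<mu>)"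
proof -
  have dP: "d v \<in> P" for v unfolding d_def using D by (rule D_rp)
  have dc: "cl (d v) = D (dv v)" for v unfolding d_def using D by (rule D_rp)
  show muP: "\<mu> \<in> P" unfolding \<mu>_def using dP by (intro P_sum P_mul dv_P) auto
  fix u assume u: "u \<in> V"
  have a: "cl (d u) = cl (mul (d u) (dv u) + mul (dv u) (d u))"
    using D_leib[OF D dv_P[OF u] dv_P[OF u]] D_rp(2)[OF D, of "dv u"] by (simp add: dv_dv d_def)
  have c: "mul (dv u) (mul (d u) (dv u)) \<in> I"
  proof -
    have "cl (mul (dv u) (d u)) = cl (mul (dv u) (mul (d u) (dv u) + mul (dv u) (d u)))"
      using a dP u by (intro cl_mul_left) (auto intro!: P_add P_mul dv_P)
    also have "\<dots> = cl (mul (dv u) (mul (d u) (dv u)) + mul (dv u) (d u))"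
      using dP u by (simp add: mul_add_right P_mul dv_P mul_assoc[symmetric] dv_dv)
    finally show ?thesis by (simp add: cls_eq) (metis I_uminus minus_minus)
  qed
  have dd: "cl (mul (dv u) (mul (d v) (dv v))) = cl (- mul (d u) (dv v))" if v: "v \<in> V" "v \<noteq> u" for v
  proof -
    have "D (mul (dv u) (dv v)) = I" using v D_zero[OF D] by (simp add: dv_dv)
    hence "cl (mul (d u) (dv v) + mul (dv u) (d v)) = cl 0"
      using D_leib[OF D dv_P[OF u] dv_P[OF v(1)]] by (simp add: d_def cls_zero)
    hence "cl (mul (mul (d u) (dv v) + mul (dv u) (d v)) (dv v)) = cl (mul 0 (dv v))"
      using dP u v by (intro cl_mul_right) (auto intro!: P_add P_mul dv_P P_zero)
    hence "cl (mul (d u) (dv v) + mul (dv u) (mul (d v) (dv v))) = cl 0"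
      using dP u v by (simp add: mul_add_left P_mul dv_P mul_assoc dv_dv)
    thus ?thesis by (simp add: cls_eq algebra_simps)
  qed
  have Vu: "V = insert u (V - {u})" "finite (V - {u})" "u \<notin> V - {u}" using u finV by auto
  have l: "mul \<mu> (dv u) = mul (d u) (dv u)"
  proof -
    have "mul \<mu> (dv u) = (\<Sum>v\<in>V. mul (mul (d v) (dv v)) (dv u))"
      unfolding \<mu>_def using finV dP u by (simp add: mul_sum_left P_mul dv_P)
    also have "\<dots> = (\<Sum>v\<in>V. if v = u then mul (d u) (dv u) else 0)"
      using dP u by (intro sum.cong refl) (simp add: mul_assoc dv_P dv_dv)
    finally show ?thesis using u finV by simp
  qed
  have r: "cl (mul (dv u) \<mu>) = cl (\<Sum>v\<in>V - {u}. - mul (d u) (dv v))"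
  proof -
    have "mul (dv u) \<mu> = (\<Sum>v\<in>V. mul (dv u) (mul (d v) (dv v)))"
      unfolding \<mu>_def using finV dP u by (intro mul_sum_right) (auto intro: P_mul dv_P)
    also have "\<dots> = mul (dv u) (mul (d u) (dv u)) + (\<Sum>v\<in>V - {u}. mul (dv u) (mul (d v) (dv v)))"
      by (rule sum.remove[OF finV u])
    finally have e: "mul (dv u) \<mu> = \<dots>" .
    have "cl (mul (dv u) \<mu>) = cl (0 + (\<Sum>v\<in>V - {u}. - mul (d u) (dv v)))"
      unfolding e using c dd Vu(2) by (intro cl_add_cong cl_sum_cong1) (auto simp: cls_eq)
    thus ?thesis by simp
  qed
  have "cl (mul \<mu> (dv u) - mul (dv u) \<mu>) = cl (mul (d u) (dv u) - (\<Sum>v\<in>V - {u}. - mul (d u) (dv v)))"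
    unfolding l diff_conv_add_uminus using r by (intro cl_add_cong cl_uminus_cong) auto
  also have "mul (d u) (dv u) - (\<Sum>v\<in>V - {u}. - mul (d u) (dv v)) = (\<Sum>v\<in>V. mul (d u) (dv v))"
    by (simp add: sum_negf sum.remove[OF finV u])
  also have "\<dots> = mul (d u) (\<Sum>v\<in>V. dv v)" using finV dP by (simp add: mul_sum_right dv_P)
  also have "\<dots> = d u" using dP by (rule mul_unit)
  finally have X: "cl (mul \<mu> (dv u) - mul (dv u) \<mu>) = cl (d u)" .
  show "D (dv u) = cl (mul \<mu> (dv u) - mul (dv u) \<mu>)" using X dc[of u] by (simp only:)
qed


section \<open>Linear independence\<close>

abbreviation "QA' \<equiv> QA V E src tgt I Qb"
abbreviation "B1' \<equiv> B1 V E src tgt I Qb"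
abbreviation "B2' \<equiv> B2 V E src tgt I Qb"

lemma indep_gen: assumes T: "finite T" "inj_on g T" "g ` T \<subseteq> Qb"
    and s: "(\<Sum>F\<in>T. psc (k F) (rho (g F))) \<in> I" and F: "F \<in> T"
  shows "k F = 0"
proof -
  let ?h = "the_inv_into T g"
  have "(\<Sum>q\<in>g ` T. psc (k (?h q)) (rho q)) = (\<Sum>F\<in>T. psc (k (?h (g F))) (rho (g F)))"
    using T(2) by (simp add: sum.reindex)
  also have "\<dots> = (\<Sum>F\<in>T. psc (k F) (rho (g F)))"
    using T(2) by (intro sum.cong refl) (simp add: the_inv_into_f_f)
  finally have "(\<Sum>q\<in>g ` T. psc (k (?h q)) (rho q)) \<in> I" using s by simp
  hence "k (?h (g F)) = 0" using T F by (intro basis_indep[of "g ` T"]) auto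
  thus ?thesis using T(2) F by (simp add: the_inv_into_f_f)
qed

lemma Din_Diff: "s \<in> Qb \<Longrightarrow> Din s \<in> Dq"
  using Dinner_Diff[OF rho_P] qrep_spec(2) by metis

lemma qt_V: "s \<in> Qb \<Longrightarrow> qt' s \<in> V" unfolding qt_def using qrep_spec(1) path_fst by blast
lemma qh_V: "s \<in> Qb \<Longrightarrow> qh' s \<in> V" unfolding qh_def using qrep_spec(1) path_pend by blast

lemma Din_x: "s \<in> Qb \<Longrightarrow> x \<in> P \<Longrightarrow> Din s x = cl (mul (rho s) x - mul x (rho s))"
  using Dinner_cl[OF rho_P] qrep_spec(2) by metis

lemma Din_v: assumes "s \<in> Qb" "v \<in> V"
  shows "Din s (dv v) = cl (psc ((if qh' s = v then 1 else 0) - (if qt' s = v then 1 else 0)) (rho s))"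
proof -
  have "mul (rho s) (dv v) - mul (dv v) (rho s) = psc ((if qh' s = v then 1 else 0) - (if qt' s = v then 1 else 0)) (rho s)"
    by (simp add: rho_v v_rho psc_def fun_eq_iff algebra_simps)
  thus ?thesis using assms by (simp add: Din_x dv_P)
qed

lemma B1_Dq: "B1' \<subseteq> Dq" unfolding B1_def QA_def using Din_Diff by auto
lemma B2_Dq: "B2' \<subseteq> Dq" unfolding B2_def using Drs_char(1) by auto

lemma Qb_notI: "s \<in> Qb \<Longrightarrow> s \<noteq> I"
  using rho_notI qrep_spec(2) cls_eq_I by metis

lemma rpI: "rp I \<in> I" using rp(2)[OF I_Qc] cls_eq_I by blast

lemma indep:
  assumes S: "finite S" "S \<subseteq> B1' \<union> B2'" and z: "LC S (\<lambda>F. F) c = (\<lambda>x. I)"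
  shows "\<forall>F\<in>S. c F = 0"
proof -
  define sF where "sF F = (SOME s. s \<in> QA' \<and> F = Din s)" for F
  have sF: "sF F \<in> QA' \<and> F = Din (sF F)" if "F \<in> B1'" for F
    using that unfolding B1_def sF_def by (metis (mono_tags, lifting) mem_Collect_eq someI_ex)
  define rt where "rt F = (SOME p. fst p \<in> E \<and> snd p \<in> Qb \<and> src (fst p) = qt' (snd p) \<and> tgt (fst p) = qh' (snd p) \<and> F = Drs' (fst p) (snd p))" for F
  have rt: "fst (rt F) \<in> E \<and> snd (rt F) \<in> Qb \<and> src (fst (rt F)) = qt' (snd (rt F)) \<and> tgt (fst (rt F)) = qh' (snd (rt F)) \<and> F = Drs' (fst (rt F)) (snd (rt F))"
    if FB: "F \<in> B2'" for F
  proof -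
    obtain r t where "r \<in> E" "t \<in> Qb" "src r = qt' t" "tgt r = qh' t" "F = Drs' r t"
      using FB unfolding B2_def by blast
    hence ex: "\<exists>p. fst p \<in> E \<and> snd p \<in> Qb \<and> src (fst p) = qt' (snd p) \<and> tgt (fst p) = qh' (snd p) \<and> F = Drs' (fst p) (snd p)"
      by (intro exI[of _ "(r, t)"]) auto
    show ?thesis unfolding rt_def by (rule someI_ex[OF ex])
  qed
  have SD: "S \<subseteq> Dq" using S B1_Dq B2_Dq by blast
  have LCx: "(\<Sum>F\<in>S. psc (c F) (rp (F x))) \<in> I" for x
    using fun_cong[OF z, of x] unfolding LC_def cls_eq_I .
  have rpF: "cl (rp (F x)) = F x" if "F \<in> S" for F x using SD that D_rp(2) by blast
  have step1: "c F0 = 0" if F0: "F0 \<in> S \<inter> B1'" for F0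
  proof -
    define v where "v = qh' (sF F0)"
    have sF0: "sF F0 \<in> QA'" using sF F0 by blast
    hence v: "v \<in> V" unfolding v_def QA_def using qh_V by blast
    define w where "w F = (if qh' (sF F) = v then 1 else 0) - (if qt' (sF F) = v then 1 else (0::'k))" for F
    have "cl (\<Sum>F\<in>S. psc (c F) (rp (F (dv v)))) = cl (\<Sum>F\<in>S. psc (c F) (if F \<in> B1' then psc (w F) (rho (sF F)) else 0))"
      using S(1)
    proof (rule cl_sum_cong)
      fix F assume F: "F \<in> S"
      show "cl (rp (F (dv v))) = cl (if F \<in> B1' then psc (w F) (rho (sF F)) else 0)"
      proof (cases "F \<in> B1'")
        case True
        hence q: "sF F \<in> Qb" and eq: "F = Din (sF F)" using sF unfolding QA_def by auto
        have "cl (rp (F (dv v))) = F (dv v)" by (rule rpF[OF F])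
        also have "\<dots> = Din (sF F) (dv v)" by (rule fun_cong[OF eq])
        also have "\<dots> = cl (psc (w F) (rho (sF F)))" unfolding w_def by (rule Din_v[OF q v])
        finally show ?thesis using True by simp
      next
        case False
        hence "F \<in> B2'" using F S by blast
        hence "F (dv v) = I" using rt[of F] Drs_char(4)[of "fst (rt F)" "snd (rt F)" v] v by (metis (no_types))
        thus ?thesis using False rpF[OF F] cls_zero rp(2)[OF I_Qc] by simp
      qed
    qed
    also have "(\<Sum>F\<in>S. psc (c F) (if F \<in> B1' then psc (w F) (rho (sF F)) else 0))
        = (\<Sum>F\<in>S \<inter> B1'. psc (c F * w F) (rho (sF F)))"
    proof -
      have "(\<Sum>F\<in>S. psc (c F) (if F \<in> B1' then psc (w F) (rho (sF F)) else 0))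
          = (\<Sum>F\<in>S. if F \<in> B1' then psc (c F * w F) (rho (sF F)) else 0)"
        by (intro sum.cong refl) (simp add: psc_psc)
      also have "\<dots> = (\<Sum>F\<in>{F\<in>S. F \<in> B1'}. psc (c F * w F) (rho (sF F)))"
        using S(1) by (rule sum.inter_filter[symmetric])
      finally show ?thesis by (simp add: Int_def)
    qed
    finally have eq: "cl (\<Sum>F\<in>S. psc (c F) (rp (F (dv v)))) = cl (\<Sum>F\<in>S \<inter> B1'. psc (c F * w F) (rho (sF F)))" .
    have "cl (\<Sum>F\<in>S \<inter> B1'. psc (c F * w F) (rho (sF F))) = I"
      using LCx[of "dv v"] by (simp only: eq[symmetric] cls_eq_I)
    hence "(\<Sum>F\<in>S \<inter> B1'. psc (c F * w F) (rho (sF F))) \<in> I" by (simp only: cls_eq_I)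
    moreover have "inj_on sF (S \<inter> B1')"
      by (rule inj_onI) (metis IntD2 sF)
    moreover have "sF ` (S \<inter> B1') \<subseteq> Qb" using sF unfolding QA_def by auto
    ultimately have "c F0 * w F0 = 0" using S(1) F0 by (intro indep_gen[of "S \<inter> B1'" sF "\<lambda>F. c F * w F"]) auto
    moreover have "w F0 = 1" using sF0 unfolding w_def v_def QA_def by auto
    ultimately show ?thesis by simp
  qed
  have step2: "c F0 = 0" if F0: "F0 \<in> S - B1'" for F0
  proof -
    have F0B: "F0 \<in> B2'" using F0 S by blast
    define e where "e = fst (rt F0)"
    have e: "e \<in> E" using rt[OF F0B] by (simp add: e_def)
    define g :: "('v,'e,'k) pa" where "g = delta (src e, [e])"
    have s1: "(\<Sum>F\<in>S. psc (c F) (rp (F g))) = (\<Sum>F\<in>S - B1'. psc (c F) (rp (F g)))"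
      using S(1) step1 by (intro sum.mono_neutral_cong_right) auto
    have s2: "cl (\<Sum>F\<in>S - B1'. psc (c F) (rp (F g))) = cl (\<Sum>F\<in>S - B1'. psc (c F) (if fst (rt F) = e then rho (snd (rt F)) else 0))"
      using S(1)
    proof (intro cl_sum_cong)
      fix F assume F: "F \<in> S - B1'"
      hence FB: "F \<in> B2'" using S by blast
      note r = rt[OF FB]
      show "cl (rp (F g)) = cl (if fst (rt F) = e then rho (snd (rt F)) else 0)"
      proof (cases "fst (rt F) = e")
        case True
        hence "F g = snd (rt F)" using r Drs_char(2)[of "fst (rt F)" "snd (rt F)"] unfolding g_def by metis
        have sq: "snd (rt F) \<in> Qb" using r by blast
        have "cl (rp (F g)) = F g" using rpF F by blast
        also have "\<dots> = cl (rho (snd (rt F)))" using \<open>F g = snd (rt F)\<close> qrep_spec(2)[OF sq] by simp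
        finally show ?thesis using True by simp
      next
        case False
        hence "F g = I" using r Drs_char(3)[of "fst (rt F)" "snd (rt F)" e] e unfolding g_def by metis
        thus ?thesis using False rpF F cls_zero rp(2)[OF I_Qc] by auto
      qed
    qed simp
    have s3: "(\<Sum>F\<in>S - B1'. psc (c F) (if fst (rt F) = e then rho (snd (rt F)) else 0))
        = (\<Sum>F\<in>{F \<in> S - B1'. fst (rt F) = e}. psc (c F) (rho (snd (rt F))))"
    proof -
      have "(\<Sum>F\<in>S - B1'. psc (c F) (if fst (rt F) = e then rho (snd (rt F)) else 0))
         = (\<Sum>F\<in>S - B1'. if fst (rt F) = e then psc (c F) (rho (snd (rt F))) else 0)"
        by (intro sum.cong refl) simp
      also have "\<dots> = (\<Sum>F\<in>{F \<in> S - B1'. fst (rt F) = e}. psc (c F) (rho (snd (rt F))))"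
        using S(1) by (intro sum.inter_filter[symmetric]) auto
      finally show ?thesis .
    qed
    have eq: "cl (\<Sum>F\<in>S. psc (c F) (rp (F g))) = cl (\<Sum>F\<in>{F \<in> S - B1'. fst (rt F) = e}. psc (c F) (rho (snd (rt F))))"
      unfolding s1 s2 s3 ..
    have "cl (\<Sum>F\<in>{F \<in> S - B1'. fst (rt F) = e}. psc (c F) (rho (snd (rt F)))) = I"
      using LCx[of g] by (simp only: eq[symmetric] cls_eq_I)
    hence "(\<Sum>F\<in>{F \<in> S - B1'. fst (rt F) = e}. psc (c F) (rho (snd (rt F)))) \<in> I" by (simp only: cls_eq_I)
    moreover have "inj_on (\<lambda>F. snd (rt F)) {F \<in> S - B1'. fst (rt F) = e}"
    proof (rule inj_onI)
      fix F G assume F: "F \<in> {F \<in> S - B1'. fst (rt F) = e}" and G: "G \<in> {F \<in> S - B1'. fst (rt F) = e}"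
        and eq: "snd (rt F) = snd (rt G)"
      have "F \<in> B2'" "G \<in> B2'" using F G S by auto
      thus "F = G" using rt eq F G by (metis (mono_tags, lifting) mem_Collect_eq)
    qed
    moreover have "(\<lambda>F. snd (rt F)) ` {F \<in> S - B1'. fst (rt F) = e} \<subseteq> Qb"
      using rt S by blast
    ultimately show "c F0 = 0" using S(1) F0 unfolding e_def
      by (intro indep_gen[of "{F \<in> S - B1'. fst (rt F) = fst (rt F0)}" "\<lambda>F. snd (rt F)" c]) auto
  qed
  show ?thesis using step1 step2 by blast
qed


section \<open>Spanning\<close>

lemma psc_sum_left: "psc (sum c A) f = (\<Sum>a\<in>A. psc (c a) (f::('v,'e,'k) pa))"
  by (rule ext) (simp add: psc_def sum_fun_apply sum_distrib_right)

lemma LC_image: assumes K: "finite K"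
  shows "LC K \<Phi> c = LC (\<Phi> ` K) (\<lambda>F. F) (\<lambda>F. \<Sum>k\<in>{k\<in>K. \<Phi> k = F}. c k)"
proof (rule ext)
  fix x
  have "(\<Sum>k\<in>K. psc (c k) (rp (\<Phi> k x))) = (\<Sum>F\<in>\<Phi> ` K. \<Sum>k\<in>{k\<in>K. \<Phi> k = F}. psc (c k) (rp (\<Phi> k x)))"
    using K by (rule sum.image_gen)
  also have "\<dots> = (\<Sum>F\<in>\<Phi> ` K. psc (\<Sum>k\<in>{k\<in>K. \<Phi> k = F}. c k) (rp (F x)))"
    by (intro sum.cong refl) (simp add: psc_sum_left)
  finally show "LC K \<Phi> c x = LC (\<Phi> ` K) (\<lambda>F. F) (\<lambda>F. \<Sum>k\<in>{k\<in>K. \<Phi> k = F}. c k) x"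
    unfolding LC_def by simp
qed

lemma vanish_left: assumes D: "D \<in> Dq" and u: "u \<in> V" "D (dv u) = I" and x: "x \<in> P"
  shows "D (mul (dv u) x) = cl (mul (dv u) (rp (D x)))"
proof -
  have "D (mul (dv u) x) = cl (mul (rp (D (dv u))) x + mul (dv u) (rp (D x)))"
    using D_leib[OF D dv_P[OF u(1)] x] .
  also have "\<dots> = cl (0 + mul (dv u) (rp (D x)))"
    using u(2) rpI x by (intro cl_add_cong) (auto simp: cls_eq I_mulR)
  finally show ?thesis by simp
qed

lemma vanish_right: assumes D: "D \<in> Dq" and u: "u \<in> V" "D (dv u) = I" and x: "x \<in> P"
  shows "D (mul x (dv u)) = cl (mul (rp (D x)) (dv u))"
proof -
  have "D (mul x (dv u)) = cl (mul (rp (D x)) (dv u) + mul x (rp (D (dv u))))"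
    using D_leib[OF D x dv_P[OF u(1)]] .
  also have "\<dots> = cl (mul (rp (D x)) (dv u) + 0)"
    using u(2) rpI x by (intro cl_add_cong) (auto simp: cls_eq I_mulL)
  finally show ?thesis by simp
qed

lemma comm: assumes "finite X" "X \<subseteq> Qb" "y \<in> P"
  shows "mul (\<Sum>q\<in>X. psc (a q) (rho q)) y - mul y (\<Sum>q\<in>X. psc (a q) (rho q))
     = (\<Sum>q\<in>X. psc (a q) (mul (rho q) y - mul y (rho q)))"
proof -
  have "mul (\<Sum>q\<in>X. psc (a q) (rho q)) y = (\<Sum>q\<in>X. psc (a q) (mul (rho q) y))"
    using assms by (intro sum_pmult_left) (auto intro: P_FS rho_P)
  moreover have "mul y (\<Sum>q\<in>X. psc (a q) (rho q)) = (\<Sum>q\<in>X. psc (a q) (mul y (rho q)))"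
    using assms by (intro sum_pmult_right) (auto intro: P_FS rho_P)
  ultimately show ?thesis by (simp add: psc_diff sum_subtractf)
qed


lemma span: assumes D: "D \<in> Dq"
  shows "\<exists>S c. finite S \<and> S \<subseteq> B1' \<union> B2' \<and> D = LC S (\<lambda>F. F) c"
proof -
  obtain \<mu> where mu: "\<mu> \<in> P" "\<And>u. u \<in> V \<Longrightarrow> D (dv u) = cl (mul \<mu> (dv u) - mul (dv u) \<mu>)"
    using vertex_inner[OF D] by blast
  obtain S0 a where S0: "finite S0" "S0 \<subseteq> Qb" "\<mu> - (\<Sum>q\<in>S0. psc (a q) (rho q)) \<in> I"
    using basis_span[OF mu(1)] by blast
  define A where "A = {q\<in>S0. qt' q \<noteq> qh' q}"
  have A: "finite A" "A \<subseteq> Qb" "A \<subseteq> QA'" "A \<subseteq> S0" using S0 unfolding A_def QA_def by auto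
  define \<nu> where "\<nu> = (\<Sum>q\<in>A. psc (a q) (rho q))"
  have nuP: "\<nu> \<in> P" using A rho_P unfolding \<nu>_def by (auto intro!: P_sum P_sc)
  define \<mu>' where "\<mu>' = (\<Sum>q\<in>S0. psc (a q) (rho q))"
  have mu'P: "\<mu>' \<in> P" using S0 rho_P unfolding \<mu>'_def by (auto intro!: P_sum P_sc)
  define Dn where "Dn = Din (cl \<nu>)"
  have DnD: "Dn \<in> Dq" using Dinner_Diff[OF nuP] by (simp add: Dn_def)
  have Dn_v: "Dn (dv u) = D (dv u)" if u: "u \<in> V" for u
  proof -
    have "Dn (dv u) = cl (mul \<nu> (dv u) - mul (dv u) \<nu>)" using Dinner_cl nuP dv_P u by (simp add: Dn_def)
    also have "mul \<nu> (dv u) - mul (dv u) \<nu> = (\<Sum>q\<in>A. psc (a q) (mul (rho q) (dv u) - mul (dv u) (rho q)))"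
      unfolding \<nu>_def using A u by (intro comm) (auto intro: dv_P)
    also have "\<dots> = (\<Sum>q\<in>S0. psc (a q) (mul (rho q) (dv u) - mul (dv u) (rho q)))"
      using S0(1) A(4) by (intro sum.mono_neutral_left) (auto simp: A_def rho_v v_rho)
    also have "\<dots> = mul \<mu>' (dv u) - mul (dv u) \<mu>'"
      unfolding \<mu>'_def using S0 u by (intro comm[symmetric]) (auto intro: dv_P)
    also have "cl \<dots> = cl (mul \<mu> (dv u) - mul (dv u) \<mu>)"
    proof -
      have "(mul \<mu>' (dv u) - mul (dv u) \<mu>') - (mul \<mu> (dv u) - mul (dv u) \<mu>)
          = - (mul (\<mu> - \<mu>') (dv u) - mul (dv u) (\<mu> - \<mu>'))"
        using mu(1) mu'P u by (simp add: mul_diff_left mul_diff_right dv_P algebra_simps)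
      also have "\<dots> \<in> I"
      proof -
        have i: "\<mu> - \<mu>' \<in> I" using S0(3) unfolding \<mu>'_def .
        show ?thesis by (rule I_uminus, rule I_diff, rule I_mulR[OF dv_P[OF u] i], rule I_mulL[OF dv_P[OF u] i])
      qed
      finally show ?thesis by (simp add: cls_eq)
    qed
    also have "\<dots> = D (dv u)" using mu(2)[OF u] by simp
    finally show ?thesis .
  qed
  define \<Phi>1 where "\<Phi>1 = (\<lambda>b::bool. if b then D else Dn)"
  define D1 where "D1 = LC UNIV \<Phi>1 (\<lambda>b. if b then 1 else -1)"
  have D1D: "D1 \<in> Dq" unfolding D1_def using D DnD by (intro LC_Diff) (auto simp: \<Phi>1_def)
  have D1x: "D1 x = cl (rp (D x) - rp (Dn x))" for x
    unfolding D1_def LC_def \<Phi>1_def UNIV_bool by (simp add: psc_minus1)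
  have D1v: "D1 (dv u) = I" if "u \<in> V" for u
    using D1x[of "dv u"] Dn_v[OF that] by (simp add: cls_zero)
  define ge where "ge e = (delta (src e, [e]) :: ('v,'e,'k) pa)" for e
  have geP: "ge e \<in> P" if "e \<in> E" for e using that st unfolding ge_def by (intro delta_P) (simp add: path_single)
  have ge_split: "ge e = mul (dv (src e)) (mul (ge e) (dv (tgt e)))" for e
    unfolding ge_def by (simp add: mul_d_v mul_v_d) (simp add: pend_def)
  have D1e: "D1 (ge e) = cl (mul (dv (src e)) (mul (rp (D1 (ge e))) (dv (tgt e))))" if e: "e \<in> E" for e
  proof -
    have V: "src e \<in> V" "tgt e \<in> V" using st e by auto
    have "D1 (ge e) = D1 (mul (dv (src e)) (mul (ge e) (dv (tgt e))))" by (subst ge_split) rule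
    also have "\<dots> = cl (mul (dv (src e)) (rp (D1 (mul (ge e) (dv (tgt e))))))"
      using D1D V D1v geP[OF e] by (intro vanish_left) (auto intro: P_mul dv_P)
    also have "\<dots> = cl (mul (dv (src e)) (mul (rp (D1 (ge e))) (dv (tgt e))))"
    proof (rule cl_mul_left)
      show "cl (rp (D1 (mul (ge e) (dv (tgt e))))) = cl (mul (rp (D1 (ge e))) (dv (tgt e)))"
        using vanish_right[OF D1D V(2) D1v[OF V(2)] geP[OF e]] D_rp(2)[OF D1D, of "mul (ge e) (dv (tgt e))"] by (simp only:)
    qed (use D1D V in \<open>auto intro: P_mul dv_P D_rp\<close>)
    finally show ?thesis .
  qed
  have ex: "\<forall>e\<in>E. \<exists>p. finite (fst p) \<and> fst p \<subseteq> Qb \<and> rp (D1 (ge e)) - (\<Sum>s\<in>fst p. psc (snd p s) (rho s)) \<in> I"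
  proof
    fix e assume "e \<in> E"
    obtain S b where Sb: "finite S" "S \<subseteq> Qb" "rp (D1 (ge e)) - (\<Sum>s\<in>S. psc (b s) (rho s)) \<in> I"
      using basis_span[OF D_rp(1)[OF D1D, of "ge e"]] by blast
    show "\<exists>p. finite (fst p) \<and> fst p \<subseteq> Qb \<and> rp (D1 (ge e)) - (\<Sum>s\<in>fst p. psc (snd p s) (rho s)) \<in> I"
      by (rule exI[of _ "(S, b)"]) (simp only: fst_conv snd_conv Sb simp_thms)
  qed
  obtain f where f: "\<forall>e\<in>E. finite (fst (f e)) \<and> fst (f e) \<subseteq> Qb \<and> rp (D1 (ge e)) - (\<Sum>s\<in>fst (f e). psc (snd (f e) s) (rho s)) \<in> I"
    using bchoice[OF ex] by blast
  define Se where "Se e = fst (f e)" for e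
  define \<beta> where "\<beta> e = snd (f e)" for e
  have Se: "finite (Se e)" "Se e \<subseteq> Qb" "rp (D1 (ge e)) - (\<Sum>s\<in>Se e. psc (\<beta> e s) (rho s)) \<in> I" if "e \<in> E" for e
    using f that unfolding Se_def \<beta>_def by auto
  define Pe where "Pe e = {s\<in>Se e. qt' s = src e \<and> qh' s = tgt e}" for e
  have Pe: "finite (Pe e)" "Pe e \<subseteq> Qb" if "e \<in> E" for e using Se[OF that] unfolding Pe_def by auto
  have PeQ: "s \<in> Qb" if "e \<in> E" "s \<in> Pe e" for e s using Pe that by blast
  have D1e': "D1 (ge e) = cl (\<Sum>s\<in>Pe e. psc (\<beta> e s) (rho s))" if e: "e \<in> E" for e
  proof -
    have V: "src e \<in> V" "tgt e \<in> V" using st e by auto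
    have SP: "(\<Sum>s\<in>Se e. psc (\<beta> e s) (rho s)) \<in> P" using Se[OF e] rho_P by (auto intro!: P_sum P_sc)
    have "D1 (ge e) = cl (mul (dv (src e)) (mul (rp (D1 (ge e))) (dv (tgt e))))" by (rule D1e[OF e])
    also have "\<dots> = cl (mul (dv (src e)) (mul (\<Sum>s\<in>Se e. psc (\<beta> e s) (rho s)) (dv (tgt e))))"
    proof (rule cl_mul_left)
      show "cl (mul (rp (D1 (ge e))) (dv (tgt e))) = cl (mul (\<Sum>s\<in>Se e. psc (\<beta> e s) (rho s)) (dv (tgt e)))"
        using Se(3)[OF e] SP V D_rp(1)[OF D1D] by (intro cl_mul_right) (auto simp: cls_eq intro: dv_P)
    qed (use SP V D_rp(1)[OF D1D] in \<open>auto intro: P_mul dv_P\<close>)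
    also have "mul (dv (src e)) (mul (\<Sum>s\<in>Se e. psc (\<beta> e s) (rho s)) (dv (tgt e)))
       = (\<Sum>s\<in>Se e. psc (\<beta> e s) (mul (dv (src e)) (mul (rho s) (dv (tgt e)))))"
    proof -
      have "mul (\<Sum>s\<in>Se e. psc (\<beta> e s) (rho s)) (dv (tgt e)) = (\<Sum>s\<in>Se e. psc (\<beta> e s) (mul (rho s) (dv (tgt e))))"
        using Se[OF e] V by (intro sum_pmult_left) (auto intro: P_FS rho_P dv_P)
      moreover have "mul (dv (src e)) (\<Sum>s\<in>Se e. psc (\<beta> e s) (mul (rho s) (dv (tgt e)))) = (\<Sum>s\<in>Se e. psc (\<beta> e s) (mul (dv (src e)) (mul (rho s) (dv (tgt e)))))"
        using Se[OF e] V by (intro sum_pmult_right) (auto intro: P_FS rho_P dv_P P_mul)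
      ultimately show ?thesis by simp
    qed
    also have "\<dots> = (\<Sum>s\<in>Se e. if qt' s = src e \<and> qh' s = tgt e then psc (\<beta> e s) (rho s) else 0)"
      by (intro sum.cong refl) (simp add: rho_v v_rho)
    also have "\<dots> = (\<Sum>s\<in>Pe e. psc (\<beta> e s) (rho s))"
      unfolding Pe_def using Se[OF e] by (intro sum.inter_filter[symmetric]) auto
    finally show ?thesis .
  qed
  define K where "K = Inl ` A \<union> Inr ` (Sigma E Pe)"
  define \<Phi> where "\<Phi> k = (case k of Inl q \<Rightarrow> Din q | Inr p \<Rightarrow> Drs' (fst p) (snd p))" for k
  define c where "c k = (case k of Inl q \<Rightarrow> a q | Inr p \<Rightarrow> \<beta> (fst p) (snd p))" for k
  have finSig: "finite (Sigma E Pe)" using finE Pe by (intro finite_SigmaI) auto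
  have finK: "finite K" unfolding K_def using A finSig by auto
  have PeB: "src e = qt' s \<and> tgt e = qh' s" if "s \<in> Pe e" for e s using that unfolding Pe_def by auto
  have \<Phi>D: "\<Phi> k \<in> Dq" if "k \<in> K" for k
  proof (cases k)
    case (Inl q)
    hence "q \<in> Qb" using that A unfolding K_def by auto
    thus ?thesis using Inl Din_Diff by (simp add: \<Phi>_def)
  next
    case (Inr p)
    hence p: "fst p \<in> E" "snd p \<in> Pe (fst p)" using that unfolding K_def by auto
    hence "snd p \<in> Qb" using Pe by auto
    thus ?thesis using Inr p PeB[OF p(2)] Drs_char(1)[of "fst p" "snd p"] by (simp add: \<Phi>_def)
  qed
  have \<Phi>B: "\<Phi> ` K \<subseteq> B1' \<union> B2'"
    using A Pe PeB unfolding K_def \<Phi>_def B1_def B2_def by fastforce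
  have LCsplit: "LC K \<Phi> c x = cl ((\<Sum>q\<in>A. psc (a q) (rp (Din q x))) + (\<Sum>p\<in>Sigma E Pe. psc (\<beta> (fst p) (snd p)) (rp (Drs' (fst p) (snd p) x))))" for x
  proof -
    have "(\<Sum>k\<in>K. psc (c k) (rp (\<Phi> k x))) = (\<Sum>k\<in>Inl ` A. psc (c k) (rp (\<Phi> k x))) + (\<Sum>k\<in>Inr ` (Sigma E Pe). psc (c k) (rp (\<Phi> k x)))"
      unfolding K_def using A finSig by (intro sum.union_disjoint) auto
    also have "\<dots> = (\<Sum>q\<in>A. psc (a q) (rp (Din q x))) + (\<Sum>p\<in>Sigma E Pe. psc (\<beta> (fst p) (snd p)) (rp (Drs' (fst p) (snd p) x)))"
      by (simp add: sum.reindex \<Phi>_def c_def)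
    finally show ?thesis unfolding LC_def by simp
  qed
  have Dn_LC: "Dn x = cl (\<Sum>q\<in>A. psc (a q) (rp (Din q x)))" if x: "x \<in> P" for x
  proof -
    have "Dn x = cl (mul \<nu> x - mul x \<nu>)" using Dinner_cl nuP x by (simp add: Dn_def)
    also have "\<dots> = cl (\<Sum>q\<in>A. psc (a q) (mul (rho q) x - mul x (rho q)))"
      unfolding \<nu>_def using A x by (simp add: comm)
    also have "\<dots> = cl (\<Sum>q\<in>A. psc (a q) (rp (Din q x)))"
      using A(1)
    proof (rule cl_sum_cong)
      fix q assume "q \<in> A"
      hence q: "q \<in> Qb" using A by auto
      show "cl (mul (rho q) x - mul x (rho q)) = cl (rp (Din q x))"
        using D_rp(2)[OF Din_Diff[OF q], of x] Din_x[OF q x] by (simp only:)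
    qed
    finally show ?thesis .
  qed
  have D2D: "LC K \<Phi> c \<in> Dq" using finK \<Phi>D by (rule LC_Diff)
  have agree_v: "D (dv u) = LC K \<Phi> c (dv u)" if u: "u \<in> V" for u
  proof -
    have "LC K \<Phi> c (dv u) = cl ((\<Sum>q\<in>A. psc (a q) (rp (Din q (dv u)))) + (\<Sum>p\<in>Sigma E Pe. psc (\<beta> (fst p) (snd p)) (rp (Drs' (fst p) (snd p) (dv u)))))"
      by (rule LCsplit)
    also have "\<dots> = cl ((\<Sum>q\<in>A. psc (a q) (rp (Din q (dv u)))) + (\<Sum>p\<in>Sigma E Pe. psc (\<beta> (fst p) (snd p)) 0))"
    proof (intro cl_add_cong refl cl_sum_cong finSig)
      fix p assume p: "p \<in> Sigma E Pe"
      hence p': "fst p \<in> E" "snd p \<in> Qb" "src (fst p) = qt' (snd p)" "tgt (fst p) = qh' (snd p)"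
        using PeQ PeB by auto
      hence "Drs' (fst p) (snd p) (dv u) = I" using u by (rule Drs_char(4))
      thus "cl (rp (Drs' (fst p) (snd p) (dv u))) = cl 0" using rp(2)[OF I_Qc] cls_zero by simp
    qed
    also have "\<dots> = Dn (dv u)" using Dn_LC[OF dv_P[OF u]] by simp
    also have "\<dots> = D (dv u)" by (rule Dn_v[OF u])
    finally show ?thesis by simp
  qed
  have agree_e: "D (ge e0) = LC K \<Phi> c (ge e0)" if e0: "e0 \<in> E" for e0
  proof -
    have "LC K \<Phi> c (ge e0) = cl ((\<Sum>q\<in>A. psc (a q) (rp (Din q (ge e0)))) + (\<Sum>p\<in>Sigma E Pe. psc (\<beta> (fst p) (snd p)) (rp (Drs' (fst p) (snd p) (ge e0)))))"
      by (rule LCsplit)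
    also have "\<dots> = cl (rp (Dn (ge e0)) + (\<Sum>p\<in>Sigma E Pe. psc (\<beta> (fst p) (snd p)) (if fst p = e0 then rho (snd p) else 0)))"
    proof (intro cl_add_cong cl_sum_cong finSig)
      show "cl (\<Sum>q\<in>A. psc (a q) (rp (Din q (ge e0)))) = cl (rp (Dn (ge e0)))"
        using Dn_LC[OF geP[OF e0]] D_rp(2)[OF DnD, of "ge e0"] by (simp only:)
      fix p assume p: "p \<in> Sigma E Pe"
      hence p': "fst p \<in> E" "snd p \<in> Qb" "src (fst p) = qt' (snd p)" "tgt (fst p) = qh' (snd p)"
        using PeQ PeB by auto
      show "cl (rp (Drs' (fst p) (snd p) (ge e0))) = cl (if fst p = e0 then rho (snd p) else 0)"
      proof (cases "fst p = e0")
        case True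
        hence "Drs' (fst p) (snd p) (ge e0) = snd p" using Drs_char(2)[OF p'] unfolding ge_def by simp
        hence "cl (rp (Drs' (fst p) (snd p) (ge e0))) = cl (rho (snd p))"
          using D_rp(2)[OF Drs_char(1)[OF p'], of "ge e0"] qrep_spec(2)[OF p'(2)] by simp
        thus ?thesis using True by simp
      next
        case False
        hence "Drs' (fst p) (snd p) (ge e0) = I" using Drs_char(3)[OF p' e0] unfolding ge_def by simp
        thus ?thesis using False rp(2)[OF I_Qc] cls_zero by simp
      qed
    qed
    also have "(\<Sum>p\<in>Sigma E Pe. psc (\<beta> (fst p) (snd p)) (if fst p = e0 then rho (snd p) else 0))
        = (\<Sum>s\<in>Pe e0. psc (\<beta> e0 s) (rho s))"
    proof -
      have "(\<Sum>p\<in>Sigma E Pe. psc (\<beta> (fst p) (snd p)) (if fst p = e0 then rho (snd p) else 0))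
          = (\<Sum>e\<in>E. \<Sum>s\<in>Pe e. psc (\<beta> e s) (if e = e0 then rho s else 0))"
        using finE Pe by (subst sum.Sigma) (auto intro!: sum.cong simp: split_beta)
      also have "\<dots> = (\<Sum>e\<in>E. if e = e0 then (\<Sum>s\<in>Pe e. psc (\<beta> e s) (rho s)) else 0)"
        by (intro sum.cong refl) auto
      also have "\<dots> = (\<Sum>s\<in>Pe e0. psc (\<beta> e0 s) (rho s))" using finE e0 by simp
      finally show ?thesis .
    qed
    also have "cl (rp (Dn (ge e0)) + (\<Sum>s\<in>Pe e0. psc (\<beta> e0 s) (rho s))) = cl (rp (Dn (ge e0)) + (rp (D (ge e0)) - rp (Dn (ge e0))))"
      using D1e'[OF e0] D1x[of "ge e0"] by (intro cl_add_cong) auto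
    also have "\<dots> = D (ge e0)" using D_rp(2)[OF D] by simp
    finally show ?thesis by simp
  qed
  have "D = LC K \<Phi> c"
    using D D2D agree_v agree_e unfolding ge_def by (intro D_agree) auto
  also have "\<dots> = LC (\<Phi> ` K) (\<lambda>F. F) (\<lambda>F. \<Sum>k\<in>{k\<in>K. \<Phi> k = F}. c k)" using finK by (rule LC_image)
  finally show ?thesis using finK \<Phi>B by blast
qed


lemma main: "is_diff_basis V E src tgt I (B1' \<union> B2')"
proof -
  have sub: "B1' \<union> B2' \<subseteq> Dq" using B1_Dq B2_Dq by blast
  have sp: "\<forall>D\<in>Dq. \<exists>S c. finite S \<and> S \<subseteq> B1' \<union> B2' \<and> D = (\<lambda>x. qsum I S (\<lambda>F. qscale I (c F) (F x)))"
  proof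
    fix D assume "D \<in> Dq"
    then obtain S c where Sc: "finite S" "S \<subseteq> B1' \<union> B2'" "D = LC S (\<lambda>F. F) c" using span by blast
    have SD: "S \<subseteq> Dq" using Sc sub by blast
    have "D = (\<lambda>x. qsum I S (\<lambda>F. qscale I (c F) (F x)))"
      using LC_qsum[OF Sc(1) SD, of c] Sc(3) by simp
    thus "\<exists>S c. finite S \<and> S \<subseteq> B1' \<union> B2' \<and> D = (\<lambda>x. qsum I S (\<lambda>F. qscale I (c F) (F x)))"
      using Sc by blast
  qed
  have ind: "\<forall>S c. finite S \<and> S \<subseteq> B1' \<union> B2' \<and> (\<lambda>x. qsum I S (\<lambda>F. qscale I (c F) (F x))) = (\<lambda>x. I)
          \<longrightarrow> (\<forall>F\<in>S. c F = 0)"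
  proof (intro allI impI)
    fix S c assume h: "finite S \<and> S \<subseteq> B1' \<union> B2' \<and> (\<lambda>x. qsum I S (\<lambda>F. qscale I (c F) (F x))) = (\<lambda>x. I)"
    have SD: "S \<subseteq> Dq" using h sub by blast
    hence "LC S (\<lambda>F. F) c = (\<lambda>x. I)" using LC_qsum[OF _ SD, of c] h by simp
    thus "\<forall>F\<in>S. c F = 0" using h indep by blast
  qed
  show ?thesis unfolding is_diff_basis_def using sub sp ind by blast
qed

end

theorem theorem2p7:
  fixes V :: "'v set" and E :: "'e set" and src tgt :: "'e \<Rightarrow> 'v"
    and I :: "('v,'e,'k::field) pa set" and Qb :: "('v,'e,'k) pa set set"
  assumes "finite_connected_quiver V E src tgt"
    and "is_ideal V E src tgt I"
    and "I \<subseteq> R2 V E src tgt"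
    and "is_quot_basis V E src tgt I Qb"
    and "\<forall>q\<in>Qb. \<exists>p. is_path V E src tgt p \<and> q = cls I (delta p)"
    and "\<forall>v\<in>V. cls I (delta (v, [])) \<in> Qb"
    and "\<forall>e\<in>E. cls I (delta (src e, [e])) \<in> Qb"
  shows "is_diff_basis V E src tgt I (B1 V E src tgt I Qb \<union> B2 V E src tgt I Qb)"
proof -
  interpret setting V E src tgt I Qb
    using assms unfolding finite_connected_quiver_def by unfold_locales auto
  show ?thesis by (rule main)
qed

end
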